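(* In the setting of the context, assume $G_{xy}^{[1]}=1$, $G_x/G_x^{[1]}\cong S_5$ and $G_x^{[1]}\cong A_4$. Then $G_x\cong S_5\boxtimes S_4$.
   Context: $\mathcal{A}=(G_x,G_e,G_{xy})$ is a finite, primitive amalgam of degree $(5,2)$ (no nontrivial subgroup of $G_{xy}$ normal in both $G_x$ and $G_e$; $|G_x:G_{xy}|=5$, $|G_e:G_{xy}|=2$), $G=G_x*_{G_{xy}}G_e$ acts on the coset graph (5-valent tree) $\Gamma$, $x$ is the vertex with stabiliser $G_x$, $y$ the neighbour with $G_e$ the setwise stabiliser of $\{x,y\}$ and $G_x\cap G_y=G_{xy}$. $G_z^{[1]}$ is the pointwise stabiliser of $z$ and its neighbours, $G_{xy}^{[1]}=G_x^{[1]}\cap G_y^{[1]}$. $S_n\boxtimes S_m=\{(g,h)\in S_n\times S_m:\operatorname{sgn}g=\operatorname{sgn}h\}$, the index-2 subgroup of $S_n\times S_m$ with no direct factor isomorphic to $S_n$ or $S_m$. *)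

theory Defs
  imports "HOL-Algebra.Algebra" "HOL-Algebra.Sym_Groups"
begin

definition conj_set :: "('a, 'b) monoid_scheme \<Rightarrow> 'a \<Rightarrow> 'a set \<Rightarrow> 'a set" where
  "conj_set U g H = (g <#\<^bsub>U\<^esub> H) #>\<^bsub>U\<^esub> inv\<^bsub>U\<^esub> g"

(* Normal core of H in S: the kernel of the action of S on the cosets of H.
   For S = G_z the stabiliser of a vertex z and H = G_{xy}-type edge stabiliser,
   the neighbours of z correspond to the cosets of H in S, so this is G_z^{[1]}. *)
definition normal_core :: "('a, 'b) monoid_scheme \<Rightarrow> 'a set \<Rightarrow> 'a set \<Rightarrow> 'a set" where
  "normal_core U S H = (\<Inter>g\<in>S. conj_set U g H)"

(* A finite amalgam (G_x, G_e, G_xy) of degree (5,2), realised inside some ambient group U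
   (e.g. the free amalgamated product G = G_x *_{G_xy} G_e), with G_x \<inter> G_e = G_xy. *)
definition amalgam_5_2 :: "('a, 'b) monoid_scheme \<Rightarrow> 'a set \<Rightarrow> 'a set \<Rightarrow> 'a set \<Rightarrow> bool" where
  "amalgam_5_2 U Gx Ge Gxy \<longleftrightarrow>
     group U \<and> subgroup Gx U \<and> subgroup Ge U \<and> Gx \<inter> Ge = Gxy \<and>
     finite Gx \<and> finite Ge \<and>
     card (rcosets\<^bsub>U\<lparr>carrier := Gx\<rparr>\<^esub> Gxy) = 5 \<and>
     card (rcosets\<^bsub>U\<lparr>carrier := Ge\<rparr>\<^esub> Gxy) = 2"

definition primitive_amalgam :: "('a, 'b) monoid_scheme \<Rightarrow> 'a set \<Rightarrow> 'a set \<Rightarrow> 'a set \<Rightarrow> bool" where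
  "primitive_amalgam U Gx Ge Gxy \<longleftrightarrow>
     (\<forall>N. N \<subseteq> Gxy \<and> N \<lhd> U\<lparr>carrier := Gx\<rparr> \<and> N \<lhd> U\<lparr>carrier := Ge\<rparr> \<longrightarrow> N = {\<one>\<^bsub>U\<^esub>})"

definition vertex_kernel :: "('a, 'b) monoid_scheme \<Rightarrow> 'a set \<Rightarrow> 'a set \<Rightarrow> 'a set" where
  "vertex_kernel U Gx Gxy = normal_core U Gx Gxy"

(* G_y = t G_x t^{-1} for t \<in> G_e \ G_xy (t maps x to its neighbour y, t swaps x and y) *)
definition stab_y :: "('a, 'b) monoid_scheme \<Rightarrow> 'a set \<Rightarrow> 'a set \<Rightarrow> 'a set \<Rightarrow> 'a set" where
  "stab_y U Gx Ge Gxy = conj_set U (SOME t. t \<in> Ge - Gxy) Gx"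

(* G_xy^{[1]} = G_x^{[1]} \<inter> G_y^{[1]}, where G_y^{[1]} is the kernel of G_y on the
   neighbours of y, i.e. the normal core of G_xy = G_x \<inter> G_y in G_y *)
definition edge_kernel :: "('a, 'b) monoid_scheme \<Rightarrow> 'a set \<Rightarrow> 'a set \<Rightarrow> 'a set \<Rightarrow> 'a set" where
  "edge_kernel U Gx Ge Gxy = vertex_kernel U Gx Gxy \<inter> normal_core U (stab_y U Gx Ge Gxy) Gxy"

definition box_prod :: "nat \<Rightarrow> nat \<Rightarrow> ((nat \<Rightarrow> nat) \<times> (nat \<Rightarrow> nat)) monoid" where
  "box_prod n m = (sym_group n \<times>\<times> sym_group m)\<lparr> carrier :=
      {(g, h). g permutes {1..n} \<and> h permutes {1..m} \<and> sign g = sign h} \<rparr>"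

end

theory Submission
  imports Defs
begin

lemma four_eq: "{1..4::nat} = {1,2,3,4}" by auto
lemma five_eq: "{1..5::nat} = {1,2,3,4,5}" by auto
lemma four_iff: "x \<in> {1..4::nat} \<longleftrightarrow> x = 1 \<or> x = 2 \<or> x = 3 \<or> x = 4" by auto
lemma five_iff: "x \<in> {1..5::nat} \<longleftrightarrow> x = 1 \<or> x = 2 \<or> x = 3 \<or> x = 4 \<or> x = 5" by auto

lemma fix3:
  assumes s: "\<sigma> permutes {1..4::nat}" and c: "\<And>x. \<sigma> (\<sigma> (\<sigma> x)) = x"
  shows "\<exists>i\<in>{1..4}. \<sigma> i = i"
proof (rule ccontr)
  assume na: "\<not> ?thesis"
  have inS: "\<And>x. x \<in> {1..4} \<Longrightarrow> \<sigma> x \<in> {1..4}" using permutes_in_image[OF s] by metis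
  have inj: "\<And>x y. \<sigma> x = \<sigma> y \<Longrightarrow> x = y" using s by (metis permutes_inj injD)
  have nf: "\<And>i. i \<in> {1..4} \<Longrightarrow> \<sigma> i \<noteq> i" using na by blast
  define a where "a = \<sigma> 1"
  define b where "b = \<sigma> a"
  have a4: "a \<in> {1..4}" using inS a_def by auto
  have b4: "b \<in> {1..4}" using inS a4 b_def by auto
  have a1: "a \<noteq> 1" using nf[of 1] a_def by auto
  have ba: "b \<noteq> a" using nf[OF a4] b_def by auto
  have sb: "\<sigma> b = 1" using c[of 1] a_def b_def by simp
  have b1: "b \<noteq> 1" using sb nf[OF b4] by auto
  obtain d where d4: "d \<in> {1..4}" and d: "d \<noteq> 1" "d \<noteq> a" "d \<noteq> b"
     and all: "\<And>x. x \<in> {1..4} \<Longrightarrow> x = 1 \<or> x = a \<or> x = b \<or> x = d"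
  proof -
    have "a = 2 \<or> a = 3 \<or> a = 4" "b = 2 \<or> b = 3 \<or> b = 4" using a4 b4 a1 b1 by auto
    then have "\<exists>d\<in>{1..4::nat}. d \<noteq> 1 \<and> d \<noteq> a \<and> d \<noteq> b \<and> (\<forall>x\<in>{1..4}. x = 1 \<or> x = a \<or> x = b \<or> x = d)" using ba
      unfolding four_eq by (elim disjE) simp_all
    then show ?thesis using that by blast
  qed
  have "\<sigma> d \<in> {1..4}" using inS d4 by auto
  moreover have "\<sigma> d \<noteq> 1" using sb d inj by metis
  moreover have "\<sigma> d \<noteq> a" using a_def d inj by metis
  moreover have "\<sigma> d \<noteq> b" using b_def d inj by metis
  moreover have "\<sigma> d \<noteq> d" using nf d4 by auto
  ultimately show False using all by blast
qed

lemma permutes_perm: "\<sigma> permutes {1..n::nat} \<Longrightarrow> permutation \<sigma>"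
  using permutation_permutes by blast

lemma conj_evenperm:
  "permutation \<tau> \<Longrightarrow> permutation \<sigma> \<Longrightarrow> evenperm (\<tau> \<circ> \<sigma> \<circ> inv' \<tau>) = evenperm \<sigma>"
  by (auto simp add: evenperm_comp evenperm_inv permutation_compose permutation_inverse)

definition St :: "nat \<Rightarrow> (nat \<Rightarrow> nat) set" where
  "St i = {\<sigma>. \<sigma> permutes {1..4} \<and> evenperm \<sigma> \<and> \<sigma> i = i}"

lemma St_finite: "finite (St i)"
  by (rule finite_subset[OF _ finite_permutations[of "{1..4::nat}"]]) (auto simp: St_def)

lemma St_conj:
  assumes t: "\<tau> permutes {1..4}"
  shows "(\<lambda>\<sigma>. \<tau> \<circ> \<sigma> \<circ> inv' \<tau>) ` St i = St (\<tau> i)"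
proof
  have pt: "permutation \<tau>" using permutes_perm[OF t] .
  show "(\<lambda>\<sigma>. \<tau> \<circ> \<sigma> \<circ> inv' \<tau>) ` St i \<subseteq> St (\<tau> i)"
  proof
    fix \<rho> assume "\<rho> \<in> (\<lambda>\<sigma>. \<tau> \<circ> \<sigma> \<circ> inv' \<tau>) ` St i"
    then obtain \<sigma> where s: "\<sigma> permutes {1..4}" "evenperm \<sigma>" "\<sigma> i = i" and r: "\<rho> = \<tau> \<circ> \<sigma> \<circ> inv' \<tau>"
      by (auto simp: St_def)
    have "\<rho> permutes {1..4}" unfolding r
      by (intro permutes_compose permutes_inv t s)
    moreover have "evenperm \<rho>" unfolding r using conj_evenperm[OF pt permutes_perm[OF s(1)]] s by simp
    moreover have "\<rho> (\<tau> i) = \<tau> i" unfolding r using s(3) permutes_inverses(2)[OF t] by simp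
    ultimately show "\<rho> \<in> St (\<tau> i)" by (simp add: St_def)
  qed
  show "St (\<tau> i) \<subseteq> (\<lambda>\<sigma>. \<tau> \<circ> \<sigma> \<circ> inv' \<tau>) ` St i"
  proof
    fix \<rho> assume "\<rho> \<in> St (\<tau> i)"
    then have s: "\<rho> permutes {1..4}" "evenperm \<rho>" "\<rho> (\<tau> i) = \<tau> i" by (auto simp: St_def)
    define \<sigma> where "\<sigma> = inv' \<tau> \<circ> \<rho> \<circ> inv' (inv' \<tau>)"
    have it: "inv' \<tau> permutes {1..4}" using permutes_inv[OF t] .
    have "\<sigma> permutes {1..4}" unfolding \<sigma>_def
      by (intro permutes_compose permutes_inv t s it)
    moreover have "evenperm \<sigma>" unfolding \<sigma>_def
      using conj_evenperm[OF permutes_perm[OF it] permutes_perm[OF s(1)]] s by simp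
    moreover have "\<sigma> i = i" unfolding \<sigma>_def using s(3) permutes_inverses[OF t] permutes_inv_inv[OF t] by simp
    moreover have "\<rho> = \<tau> \<circ> \<sigma> \<circ> inv' \<tau>" unfolding \<sigma>_def permutes_inv_inv[OF t]
      by (simp add: fun_eq_iff permutes_inverses[OF t])
    ultimately show "\<rho> \<in> (\<lambda>\<sigma>. \<tau> \<circ> \<sigma> \<circ> inv' \<tau>) ` St i" by (auto simp: St_def)
  qed
qed

lemma conj_inj:
  assumes t: "\<tau> permutes S"
  shows "inj (\<lambda>\<sigma>. \<tau> \<circ> \<sigma> \<circ> inv' \<tau>)"
proof (rule injI)
  fix a b assume "\<tau> \<circ> a \<circ> inv' \<tau> = \<tau> \<circ> b \<circ> inv' \<tau>"
  then have "\<And>x. \<tau> (a (inv' \<tau> x)) = \<tau> (b (inv' \<tau> x))" by (metis comp_apply)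
  then have "\<And>x. \<tau> (a (inv' \<tau> (\<tau> x))) = \<tau> (b (inv' \<tau> (\<tau> x)))" by blast
  then have "\<And>x. a x = b x" using permutes_inverses[OF t] permutes_inj[OF t] by (metis injD)
  then show "a = b" by blast
qed

lemma St4: "St 4 = {\<sigma>. \<sigma> permutes {1..3}} \<inter> {\<sigma>. evenperm \<sigma>}"
proof -
  have "\<sigma> permutes {1..4} \<and> \<sigma> 4 = 4 \<longleftrightarrow> \<sigma> permutes {1..3::nat}" for \<sigma>
  proof
    assume a: "\<sigma> permutes {1..4} \<and> \<sigma> 4 = 4"
    show "\<sigma> permutes {1..3}"
    proof (rule permutes_superset[OF conjunct1[OF a]])
      fix x assume "x \<in> {1..4} - {1..3::nat}"
      then have "x = 4" by auto
      then show "\<sigma> x = x" using a by simp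
    qed
  next
    assume a: "\<sigma> permutes {1..3::nat}"
    show "\<sigma> permutes {1..4} \<and> \<sigma> 4 = 4"
      using permutes_subset[OF a] permutes_not_in[OF a] by auto
  qed
  then show ?thesis by (auto simp: St_def)
qed

lemma card_St4: "card (St 4) = 3"
proof -
  have "2 * card (carrier (alt_group 3)) = fact 3" by (rule alt_group_card_carrier) simp
  moreover have "carrier (alt_group 3) = St 4" unfolding St4 by (auto simp: alt_group_carrier)
  ultimately show ?thesis by (simp add: fact_numeral)
qed

lemma card_St:
  assumes i: "i \<in> {1..4}" shows "card (St i) = 3"
proof -
  have t: "transpose 4 i permutes {1..4::nat}" using i by (intro permutes_swap_id) auto
  have "St i = (\<lambda>\<sigma>. transpose 4 i \<circ> \<sigma> \<circ> inv' (transpose 4 i)) ` St 4"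
    using St_conj[OF t, of 4] by simp
  then have "card (St i) = card (St 4)"
    using card_image[OF inj_on_subset[OF conj_inj[OF t] subset_UNIV]] by simp
  then show ?thesis using card_St4 by simp
qed

lemma St_mem: "\<sigma> \<in> St i \<longleftrightarrow> \<sigma> permutes {1..4} \<and> evenperm \<sigma> \<and> \<sigma> i = i"
  by (simp add: St_def)

lemma St_distinct:
  assumes i: "i \<in> {1..4}" and j: "j \<in> {1..4}" and ij: "i \<noteq> j"
  shows "St i \<noteq> St j"
proof -
  obtain k l where kl: "k \<in> {1..4::nat}" "l \<in> {1..4}" "k \<noteq> i" "k \<noteq> j" "l \<noteq> i" "l \<noteq> j" "k \<noteq> l"
  proof -
    have "i=1\<or>i=2\<or>i=3\<or>i=4" "j=1\<or>j=2\<or>j=3\<or>j=4" using i j by (simp_all only: four_iff)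
    then have "\<exists>k\<in>{1..4::nat}. \<exists>l\<in>{1..4}. k \<noteq> i \<and> k \<noteq> j \<and> l \<noteq> i \<and> l \<noteq> j \<and> k \<noteq> l"
      using ij unfolding four_eq by (elim disjE) simp_all
    then show ?thesis using that by blast
  qed
  define \<sigma> where "\<sigma> = transpose j k \<circ> transpose k l"
  have "\<sigma> permutes {1..4}" unfolding \<sigma>_def
    by (intro permutes_compose permutes_swap_id) (use kl j in auto)
  moreover have "evenperm \<sigma>" unfolding \<sigma>_def
    using kl by (simp add: evenperm_comp evenperm_swap permutation_swap_id eq_commute[of j k])
  moreover have "\<sigma> i = i" unfolding \<sigma>_def using kl ij by (simp add: transpose_def)
  moreover have "\<sigma> j \<noteq> j" unfolding \<sigma>_def using kl ij by (simp add: transpose_def)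
  ultimately show ?thesis by (auto simp: St_mem)
qed

lemma perm_cancel_left:
  assumes "x permutes S" "x \<circ> a = x \<circ> b" shows "a = b"
proof
  fix z
  have "x (a z) = x (b z)" using assms(2) by (metis comp_apply)
  then show "a z = b z" by (rule injD[OF permutes_inj[OF assms(1)]])
qed

lemma perm_cancel_right:
  assumes "y permutes S" "a \<circ> y = b \<circ> y" shows "a = b"
proof
  fix z
  obtain w where "y w = z" using permutes_surj[OF assms(1)] by (metis surjD)
  then show "a z = b z" using assms(2) by (metis comp_apply)
qed

lemma sub3:
  assumes sub: "Y \<subseteq> carrier (alt_group 4)" and cl: "\<And>a b. a \<in> Y \<Longrightarrow> b \<in> Y \<Longrightarrow> a \<circ> b \<in> Y"
    and idX: "id \<in> Y" and c3: "card Y = 3"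
  shows "\<exists>i\<in>{1..4}. Y = St i"
proof -
  have fin: "finite Y" using c3 card.infinite by fastforce
  have pX: "\<And>z. z \<in> Y \<Longrightarrow> z permutes {1..4}" using sub by (auto simp: alt_group_carrier)
  obtain x where x: "x \<in> Y" "x \<noteq> id"
  proof -
    have "Y \<noteq> {id}" using c3 by auto
    then show ?thesis using that idX by blast
  qed
  have "card (Y - {id, x}) = 1" using c3 x idX fin by (simp add: card_Diff_subset)
  then obtain y where y: "Y - {id, x} = {y}" by (meson card_1_singletonE)
  have yX: "y \<in> Y" "y \<noteq> id" "y \<noteq> x" using y by auto
  have Y3: "\<And>z. z \<in> Y \<Longrightarrow> z = id \<or> z = x \<or> z = y" using y by blast
  have px: "x permutes {1..4}" "y permutes {1..4}" using pX x yX by auto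
  have xx: "x \<circ> x = y"
  proof -
    have "x \<circ> x \<in> Y" using cl x by auto
    moreover have "x \<circ> x \<noteq> x" using perm_cancel_left[OF px(1), of x id] x by auto
    moreover have "x \<circ> x \<noteq> id"
    proof
      assume xxid: "x \<circ> x = id"
      have "x \<circ> y \<in> Y" using cl x yX by auto
      moreover have "x \<circ> y \<noteq> id" using perm_cancel_left[OF px(1), of y x] xxid yX by auto
      moreover have "x \<circ> y \<noteq> x" using perm_cancel_left[OF px(1), of y id] yX by auto
      moreover have "x \<circ> y \<noteq> y" using perm_cancel_right[OF px(2), of x id] x by auto
      ultimately show False using Y3 by blast
    qed
    ultimately show ?thesis using Y3 by blast
  qed
  have xy: "x \<circ> y = id"
  proof -
    have "x \<circ> y \<in> Y" using cl x yX by auto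
    moreover have "x \<circ> y \<noteq> x" using perm_cancel_left[OF px(1), of y id] yX by auto
    moreover have "x \<circ> y \<noteq> y" using perm_cancel_right[OF px(2), of x id] x by auto
    ultimately show ?thesis using Y3 by blast
  qed
  have "\<And>z. x (x (x z)) = z" using xx xy by (metis comp_apply id_apply)
  then obtain i where i: "i \<in> {1..4}" "x i = i" using fix3[OF px(1)] by blast
  have "Y \<subseteq> St i"
  proof
    fix z assume z: "z \<in> Y"
    have "z permutes {1..4} \<and> evenperm z" using sub z by (auto simp: alt_group_carrier)
    moreover have "z i = i" using Y3[OF z] i xx by (metis comp_apply id_apply)
    ultimately show "z \<in> St i" by (simp add: St_mem)
  qed
  then have "Y = St i" using card_subset_eq[OF St_finite] c3 card_St[OF i(1)] by simp
  then show ?thesis using i by blast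
qed

lemma (in group) rcos_eq_iff:
  assumes "subgroup H G" "a \<in> carrier G" "b \<in> carrier G"
  shows "H #> a = H #> b \<longleftrightarrow> a \<otimes> inv b \<in> H"
proof
  assume "H #> a = H #> b"
  then have "a \<in> H #> b" using rcos_self[OF assms(2,1)] by simp
  then show "a \<otimes> inv b \<in> H" using subgroup.rcos_module_imp[OF assms(1) is_group assms(3)] by blast
next
  assume "a \<otimes> inv b \<in> H"
  then have "a \<in> H #> b" using subgroup.rcos_module_rev[OF assms(1) is_group assms(3,2)] by blast
  then show "H #> a = H #> b" using repr_independence[OF _ assms(3,1)] by simp
qed

lemma (in group) index2_sq:
  assumes Y: "subgroup Y G" and c2: "card (rcosets Y) = 2" and fin: "finite (carrier G)"
    and g: "g \<in> carrier G"
  shows "g \<otimes> g \<in> Y"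
proof (rule ccontr)
  assume ngg: "g \<otimes> g \<notin> Y"
  have gg: "g \<otimes> g \<in> carrier G" using g by simp
  have ng: "g \<notin> Y" using ngg g subgroup.m_closed[OF Y] by blast
  have sub: "Y \<subseteq> carrier G" using subgroup.subset[OF Y] .
  have d1: "Y #> \<one> \<noteq> Y #> g" using rcos_eq_iff[OF Y one_closed g] ng g
    by (metis inv_closed l_one subgroup.m_inv_closed inv_inv Y)
  have d2: "Y #> \<one> \<noteq> Y #> (g \<otimes> g)" using rcos_eq_iff[OF Y one_closed gg] ngg gg
    by (metis inv_closed l_one subgroup.m_inv_closed inv_inv Y)
  have "(g \<otimes> g) \<otimes> inv g = g" using g by (simp add: m_assoc)
  then have d3: "Y #> (g \<otimes> g) \<noteq> Y #> g" using rcos_eq_iff[OF Y gg g] ng by simp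
  have "{Y #> \<one>, Y #> g, Y #> (g \<otimes> g)} \<subseteq> rcosets Y" using rcosetsI[OF sub] g gg by auto
  moreover have "finite (rcosets Y)" using finite_subset[OF rcosets_subset_PowG[OF Y]] fin by blast
  ultimately have "card {Y #> \<one>, Y #> g, Y #> (g \<otimes> g)} \<le> 2" using c2 card_mono by metis
  moreover have "card {Y #> \<one>, Y #> g, Y #> (g \<otimes> g)} = 3" using d1 d2 d3 by auto
  ultimately show False by simp
qed

lemma three_cycle_cube:
  assumes "distinct [a,b,c]"
  shows "cycle_of_list [a,b,c] \<circ> cycle_of_list [a,b,c] \<circ> cycle_of_list [a,b,c] = id"
proof -
  have d: "a \<noteq> b" "a \<noteq> c" "b \<noteq> c" using assms by auto
  have p: "cycle_of_list [a,b,c] = transpose a b \<circ> transpose b c" by simp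
  have pa: "cycle_of_list [a,b,c] a = b" unfolding p using d by (simp add: transpose_def)
  have pb: "cycle_of_list [a,b,c] b = c" unfolding p using d by (simp add: transpose_def)
  have pc: "cycle_of_list [a,b,c] c = a" unfolding p using d by (simp add: transpose_def)
  have px: "cycle_of_list [a,b,c] x = x" if "x \<noteq> a" "x \<noteq> b" "x \<noteq> c" for x
    unfolding p using that by (simp add: transpose_def)
  show ?thesis
  proof
    fix x
    show "(cycle_of_list [a,b,c] \<circ> cycle_of_list [a,b,c] \<circ> cycle_of_list [a,b,c]) x = id x"
      using pa pb pc px[of x] by (cases "x = a"; cases "x = b"; cases "x = c") simp_all
  qed
qed

lemma sub60:
  assumes Y: "subgroup Y (sym_group 5)" and c: "card Y = 60"
  shows "Y = carrier (alt_group 5)"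
proof -
  interpret G: group "sym_group 5" by (rule sym_group_is_group)
  have finG: "finite (carrier (sym_group 5))" by (simp add: sym_group_def finite_permutations)
  have "card (rcosets\<^bsub>sym_group 5\<^esub> Y) * card Y = 120"
    using G.lagrange[OF Y] sym_group_card_carrier[of 5] by (simp add: order_def fact_numeral)
  then have c2: "card (rcosets\<^bsub>sym_group 5\<^esub> Y) = 2" using c by simp
  have sq: "g \<circ> g \<in> Y" if "g permutes {1..5}" for g
    using G.index2_sq[OF Y c2 finG] that by (simp add: sym_group_carrier sym_group_mult)
  have tc: "three_cycles 5 \<subseteq> Y"
  proof
    fix p assume "p \<in> three_cycles 5"
    then obtain cs where p: "p = cycle_of_list cs" and cs: "cycle cs" "length cs = 3" "set cs \<subseteq> {1..5}"
      by blast
    have cs3: "cs = [cs!0, cs!1, cs!2]" using stupid_lemma[OF cs(2)] .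
    have pp: "p permutes {1..5}" using permutes_subset[OF cycle_permutes cs(3)] p by simp
    have "p \<circ> p \<circ> p = id" using three_cycle_cube[of "cs!0" "cs!1" "cs!2"] cs(1) cs3 p by metis
    then have "p = (p \<circ> p) \<circ> (p \<circ> p)" by (metis comp_assoc comp_id)
    moreover have "p \<circ> p \<in> Y" using sq[OF pp] .
    ultimately show "p \<in> Y" using subgroup.m_closed[OF Y, of "p \<circ> p" "p \<circ> p"]
      by (simp add: sym_group_mult)
  qed
  have Z: "subgroup (Y \<inter> carrier (alt_group 5)) (sym_group 5)"
    using subgroup_Int[OF Y alt_group_is_subgroup] .
  have Z': "subgroup (Y \<inter> carrier (alt_group 5)) (alt_group 5)"
    using G.subgroup_incl[OF Z alt_group_is_subgroup] by (simp add: alt_group_def)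
  interpret A: group "alt_group 5" by (rule alt_group_is_group)
  have "three_cycles 5 \<subseteq> Y \<inter> carrier (alt_group 5)" using tc three_cycles_incl by blast
  then have "generate (alt_group 5) (three_cycles 5) \<subseteq> Y \<inter> carrier (alt_group 5)"
    using A.generate_subgroup_incl[OF _ Z'] by blast
  then have sub: "carrier (alt_group 5) \<subseteq> Y" using alt_group_carrier_as_three_cycles by blast
  have "2 * card (carrier (alt_group 5)) = fact 5" by (rule alt_group_card_carrier) simp
  then have "card (carrier (alt_group 5)) = 60" by (simp add: fact_numeral)
  moreover have "finite Y" using c card.infinite by fastforce
  ultimately show ?thesis using card_subset_eq[OF _ sub] c by simp
qed

lemma center5:
  assumes t: "\<tau> permutes {1..5::nat}" and t1: "\<tau> 1 = 1"
    and comm: "\<And>\<sigma>. \<sigma> permutes {1..5} \<Longrightarrow> \<sigma> 1 = 1 \<Longrightarrow> \<tau> \<circ> \<sigma> = \<sigma> \<circ> \<tau>"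
  shows "\<tau> = id"
proof -
  have inj: "\<And>x y. \<tau> x = \<tau> y \<Longrightarrow> x = y" using t by (metis permutes_inj injD)
  have ab: "\<tau> a = a \<or> \<tau> a = b" if ab: "a \<in> {2..5}" "b \<in> {2..5}" "a \<noteq> b" for a b
  proof -
    have "transpose a b permutes {1..5}" using ab by (intro permutes_swap_id) auto
    moreover have "transpose a b 1 = 1" using ab by (auto simp: transpose_def)
    ultimately have "\<tau> \<circ> transpose a b = transpose a b \<circ> \<tau>" using comm by blast
    then have "\<tau> (transpose a b a) = transpose a b (\<tau> a)" by (metis comp_apply)
    then have "\<tau> b = transpose a b (\<tau> a)" by simp
    show ?thesis
    proof (rule ccontr)
      assume n: "\<not> (\<tau> a = a \<or> \<tau> a = b)"
      then have "transpose a b (\<tau> a) = \<tau> a" by (simp add: transpose_def)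
      then have "\<tau> b = \<tau> a" using \<open>\<tau> b = transpose a b (\<tau> a)\<close> by simp
      then show False using inj ab(3) by metis
    qed
  qed
  have fx: "\<tau> a = a" if a: "a \<in> {1..5}" for a
  proof (cases "a = 1")
    case True then show ?thesis using t1 by simp
  next
    case False
    then have a2: "a \<in> {2..5}" using a by auto
    have "\<exists>b\<in>{2..5::nat}. \<exists>c\<in>{2..5}. b \<noteq> a \<and> c \<noteq> a \<and> b \<noteq> c"
    proof -
      have "a = 2 \<or> a = 3 \<or> a = 4 \<or> a = 5" using a2 by auto
      moreover have "{2..5::nat} = {2,3,4,5}" by auto
      ultimately show ?thesis by (elim disjE) simp_all
    qed
    then obtain b c where bc: "b \<in> {2..5}" "c \<in> {2..5}" "b \<noteq> a" "c \<noteq> a" "b \<noteq> c" by blast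
    show ?thesis using ab[OF a2 bc(1)] ab[OF a2 bc(2)] bc by auto
  qed
  show ?thesis
  proof
    fix x show "\<tau> x = id x"
      using fx permutes_not_in[OF t, of x] by (cases "x \<in> {1..5}") auto
  qed
qed

lemma sign_eq_iff: "sign g = sign h \<longleftrightarrow> evenperm g = evenperm h"
  by (simp add: sign_def)

lemma card_box: "card (carrier (box_prod 5 4)) = 1440"
proof -
  define E5 where "E5 = {g. g permutes {1..5::nat} \<and> evenperm g}"
  define O5 where "O5 = {g. g permutes {1..5::nat} \<and> \<not> evenperm g}"
  define E4 where "E4 = {g. g permutes {1..4::nat} \<and> evenperm g}"
  define O4 where "O4 = {g. g permutes {1..4::nat} \<and> \<not> evenperm g}"
  have "carrier (box_prod 5 4) = E5 \<times> E4 \<union> O5 \<times> O4"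
    by (auto simp: box_prod_def E5_def O5_def E4_def O4_def sign_eq_iff)
  moreover have "2 * card E5 = fact 5" unfolding E5_def
    using alt_group_card_carrier[of 5] by (simp add: alt_group_def sym_group_def)
  moreover have "2 * card E4 = fact 4" unfolding E4_def
    using alt_group_card_carrier[of 4] by (simp add: alt_group_def sym_group_def)
  moreover have "card E5 + card O5 = fact 5"
  proof -
    have u: "E5 \<union> O5 = {g. g permutes {1..5::nat}}" unfolding E5_def O5_def by blast
    have "card (E5 \<union> O5) = fact 5" unfolding u using card_permutations[of "{1..5::nat}" 5] by simp
    moreover have "finite E5" "finite O5" unfolding E5_def O5_def
      using finite_permutations[of "{1..5::nat}"] by (auto intro: finite_subset)
    moreover have "E5 \<inter> O5 = {}" unfolding E5_def O5_def by blast
    ultimately show ?thesis using card_Un_disjoint[of E5 O5] by simp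
  qed
  moreover have "card E4 + card O4 = fact 4"
  proof -
    have u: "E4 \<union> O4 = {g. g permutes {1..4::nat}}" unfolding E4_def O4_def by blast
    have "card (E4 \<union> O4) = fact 4" unfolding u using card_permutations[of "{1..4::nat}" 4] by simp
    moreover have "finite E4" "finite O4" unfolding E4_def O4_def
      using finite_permutations[of "{1..4::nat}"] by (auto intro: finite_subset)
    moreover have "E4 \<inter> O4 = {}" unfolding E4_def O4_def by blast
    ultimately show ?thesis using card_Un_disjoint[of E4 O4] by simp
  qed
  moreover have "finite (E5 \<times> E4)" "finite (O5 \<times> O4)" "E5 \<times> E4 \<inter> O5 \<times> O4 = {}"
    unfolding E5_def O5_def E4_def O4_def
    using finite_permutations[of "{1..5::nat}"] finite_permutations[of "{1..4::nat}"]
    by (auto intro: finite_subset)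
  ultimately show ?thesis by (simp add: card_Un_disjoint card_cartesian_product fact_numeral)
qed

definition cg :: "('a, 'b) monoid_scheme \<Rightarrow> 'a \<Rightarrow> 'a \<Rightarrow> 'a" where
  "cg G g x = g \<otimes>\<^bsub>G\<^esub> x \<otimes>\<^bsub>G\<^esub> inv\<^bsub>G\<^esub> g"

context group begin

lemma gl1 [simp]: "g \<in> carrier G \<Longrightarrow> z \<in> carrier G \<Longrightarrow> inv g \<otimes> (g \<otimes> z) = z"
  by (simp add: m_assoc[symmetric])

lemma gl2 [simp]: "g \<in> carrier G \<Longrightarrow> z \<in> carrier G \<Longrightarrow> g \<otimes> (inv g \<otimes> z) = z"
  by (simp add: m_assoc[symmetric])

lemma cg_closed [simp]: "g \<in> carrier G \<Longrightarrow> x \<in> carrier G \<Longrightarrow> cg G g x \<in> carrier G"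
  by (simp add: cg_def)

lemma cg_mult: "g \<in> carrier G \<Longrightarrow> x \<in> carrier G \<Longrightarrow> y \<in> carrier G \<Longrightarrow>
   cg G g (x \<otimes> y) = cg G g x \<otimes> cg G g y"
  by (simp add: cg_def m_assoc)

lemma cg_inv: "g \<in> carrier G \<Longrightarrow> x \<in> carrier G \<Longrightarrow> cg G g (inv x) = inv (cg G g x)"
  by (simp add: cg_def m_assoc inv_mult_group)

lemma cg_comp: "g \<in> carrier G \<Longrightarrow> h \<in> carrier G \<Longrightarrow> x \<in> carrier G \<Longrightarrow>
   cg G (g \<otimes> h) x = cg G g (cg G h x)"
  by (simp add: cg_def m_assoc inv_mult_group)

lemma cg_one1 [simp]: "x \<in> carrier G \<Longrightarrow> cg G \<one> x = x"
  by (simp add: cg_def)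

lemma cg_one2 [simp]: "g \<in> carrier G \<Longrightarrow> cg G g \<one> = \<one>"
  by (simp add: cg_def)

lemma cg_cancel1 [simp]: "g \<in> carrier G \<Longrightarrow> x \<in> carrier G \<Longrightarrow> cg G (inv g) (cg G g x) = x"
  using cg_comp[of "inv g" g x] by simp

lemma cg_cancel2 [simp]: "g \<in> carrier G \<Longrightarrow> x \<in> carrier G \<Longrightarrow> cg G g (cg G (inv g) x) = x"
  using cg_comp[of g "inv g" x] by simp

lemma cg_cg: "g \<in> carrier G \<Longrightarrow> p \<in> carrier G \<Longrightarrow> x \<in> carrier G \<Longrightarrow>
   cg G g (cg G p x) = cg G (cg G g p) (cg G g x)"
  by (simp add: cg_def m_assoc inv_mult_group)

lemma cg_fix_iff: "g \<in> carrier G \<Longrightarrow> x \<in> carrier G \<Longrightarrow> cg G g x = x \<longleftrightarrow> g \<otimes> x = x \<otimes> g"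
proof -
  assume g: "g \<in> carrier G" and x: "x \<in> carrier G"
  have "cg G g x = x \<longleftrightarrow> cg G g x \<otimes> g = x \<otimes> g" using g x by (metis cg_closed r_cancel)
  also have "cg G g x \<otimes> g = g \<otimes> x" using g x by (simp add: cg_def m_assoc)
  finally show ?thesis .
qed

lemma cg_inj: "g \<in> carrier G \<Longrightarrow> x \<in> carrier G \<Longrightarrow> y \<in> carrier G \<Longrightarrow> cg G g x = cg G g y \<Longrightarrow> x = y"
  by (metis cg_cancel1)

lemma cg_commute: "g \<in> carrier G \<Longrightarrow> x \<in> carrier G \<Longrightarrow> y \<in> carrier G \<Longrightarrow> x \<otimes> y = y \<otimes> x \<Longrightarrow>
  cg G g x \<otimes> cg G g y = cg G g y \<otimes> cg G g x"
  by (simp add: cg_mult[symmetric])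

lemma preimage_subgroup:
  assumes "subgroup Y G" "g \<in> carrier G"
  shows "subgroup {x \<in> carrier G. cg G g x \<in> Y} G"
proof (rule subgroupI)
  have "\<one> \<in> {x \<in> carrier G. cg G g x \<in> Y}" using assms subgroup.one_closed[OF assms(1)] by simp
  then show "{x \<in> carrier G. cg G g x \<in> Y} \<noteq> {}" by blast
  show "\<And>a. a \<in> {x \<in> carrier G. cg G g x \<in> Y} \<Longrightarrow> inv a \<in> {x \<in> carrier G. cg G g x \<in> Y}"
    using assms by (simp add: cg_inv subgroup.m_inv_closed)
  show "\<And>a b. a \<in> {x \<in> carrier G. cg G g x \<in> Y} \<Longrightarrow> b \<in> {x \<in> carrier G. cg G g x \<in> Y} \<Longrightarrow>
      a \<otimes> b \<in> {x \<in> carrier G. cg G g x \<in> Y}"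
    using assms by (simp add: cg_mult subgroup.m_closed)
qed auto

lemma card_mult_trivial:
  assumes A: "subgroup A G" and B: "subgroup B G" and AB: "A \<inter> B = {\<one>}" and fA: "finite A" and fB: "finite B"
  shows "card {a \<otimes> b | a b. a \<in> A \<and> b \<in> B} = card A * card B"
proof -
  have eq: "{a \<otimes> b | a b. a \<in> A \<and> b \<in> B} = (\<lambda>(a,b). a \<otimes> b) ` (A \<times> B)" by (auto simp: image_def)
  have sA: "A \<subseteq> carrier G" "B \<subseteq> carrier G" using A B subgroup.subset by auto
  have "inj_on (\<lambda>(a,b). a \<otimes> b) (A \<times> B)"
  proof (rule inj_onI, clarify)
    fix a b a' b' assume ab: "a \<in> A" "b \<in> B" "a' \<in> A" "b' \<in> B" "a \<otimes> b = a' \<otimes> b'"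
    have c: "a \<in> carrier G" "b \<in> carrier G" "a' \<in> carrier G" "b' \<in> carrier G" using ab sA by auto
    have e: "inv a' \<otimes> a = b' \<otimes> inv b"
    proof -
      have "inv a' \<otimes> (a \<otimes> b) \<otimes> inv b = inv a' \<otimes> (a' \<otimes> b') \<otimes> inv b" using ab(5) by simp
      also have "\<dots> = b' \<otimes> inv b" using c by simp
      also have "inv a' \<otimes> (a \<otimes> b) \<otimes> inv b = inv a' \<otimes> a" using c by (simp add: m_assoc)
      finally show ?thesis by simp
    qed
    have e1: "inv a' \<otimes> a \<in> A" using A ab by (simp add: subgroup.m_closed subgroup.m_inv_closed)
    have e2: "inv a' \<otimes> a \<in> B" unfolding e using B ab by (simp add: subgroup.m_closed subgroup.m_inv_closed)
    have e3: "inv a' \<otimes> a = \<one>" using e1 e2 AB by blast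
    have "a = a' \<otimes> (inv a' \<otimes> a)" using c by simp
    also have "\<dots> = a'" using e3 c by simp
    finally have "a = a'" .
    moreover have "b = b'"
    proof -
      have "a \<otimes> b = a \<otimes> b'" using ab(5) \<open>a = a'\<close> by simp
      then show ?thesis using l_cancel[of a b b'] c by blast
    qed
    ultimately show "a = a' \<and> b = b'" by simp
  qed
  then show ?thesis unfolding eq using card_image card_cartesian_product[of A B] by metis
qed

end

lemma same_fibres_card:
  assumes "\<And>x y. x \<in> A \<Longrightarrow> y \<in> A \<Longrightarrow> f x = f y \<longleftrightarrow> g x = g y"
  shows "card (f ` A) = card (g ` A)"
proof -
  have "bij_betw (\<lambda>u. g (inv_into A f u)) (f ` A) (g ` A)"
  proof (rule bij_betw_imageI)
    show "inj_on (\<lambda>u. g (inv_into A f u)) (f ` A)"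
    proof (rule inj_onI)
      fix u v assume "u \<in> f ` A" "v \<in> f ` A" "g (inv_into A f u) = g (inv_into A f v)"
      then show "u = v" using assms by (metis f_inv_into_f inv_into_into)
    qed
    show "(\<lambda>u. g (inv_into A f u)) ` f ` A = g ` A"
    proof
      show "(\<lambda>u. g (inv_into A f u)) ` f ` A \<subseteq> g ` A" by (auto intro: inv_into_into)
      show "g ` A \<subseteq> (\<lambda>u. g (inv_into A f u)) ` f ` A"
      proof
        fix w assume "w \<in> g ` A"
        then obtain x where x: "x \<in> A" "w = g x" by blast
        have "inv_into A f (f x) \<in> A" "f (inv_into A f (f x)) = f x" using x by (auto intro: inv_into_into f_inv_into_f)
        then have "g (inv_into A f (f x)) = g x" using assms x by blast
        then show "w \<in> (\<lambda>u. g (inv_into A f u)) ` f ` A" using x by force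
      qed
    qed
  qed
  then show ?thesis by (rule bij_betw_same_card)
qed

lemma (in group) conj_set_mem:
  assumes g: "g \<in> carrier G" and Y: "Y \<subseteq> carrier G"
  shows "y \<in> conj_set G g Y \<longleftrightarrow> y \<in> carrier G \<and> cg G (inv g) y \<in> Y"
proof
  assume "y \<in> conj_set G g Y"
  then obtain p where p: "p \<in> Y" "y = g \<otimes> p \<otimes> inv g"
    unfolding conj_set_def l_coset_def r_coset_def by blast
  have pc: "p \<in> carrier G" using p Y by auto
  have "y = cg G g p" using p by (simp add: cg_def)
  then show "y \<in> carrier G \<and> cg G (inv g) y \<in> Y" using g pc p by simp
next
  assume a: "y \<in> carrier G \<and> cg G (inv g) y \<in> Y"
  define p where "p = cg G (inv g) y"
  have "cg G g p = y" using a g p_def by simp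
  then have e: "y = g \<otimes> p \<otimes> inv g" by (simp add: cg_def)
  have pY: "p \<in> Y" using a p_def by simp
  have "g \<otimes> p \<in> g <# Y" unfolding l_coset_def using pY by blast
  then have "g \<otimes> p \<otimes> inv g \<in> (g <# Y) #> inv g" unfolding r_coset_def by blast
  then show "y \<in> conj_set G g Y" unfolding conj_set_def e .
qed

locale amal = group U for U :: "('a, 'b) monoid_scheme" (structure) +
  fixes H P K t j
  assumes H: "subgroup H U" and P: "subgroup P U" and PH: "P \<subseteq> H" and finH: "finite H"
  and Kdef: "K = normal_core U H P"
  and cR: "card (rcosets\<^bsub>U\<lparr>carrier := H\<rparr>\<^esub> P) = 5"
  and cQ: "card (rcosets\<^bsub>U\<lparr>carrier := H\<rparr>\<^esub> K) = 120"
  and j: "j \<in> iso (U\<lparr>carrier := K\<rparr>) (alt_group 4)"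
  and t: "t \<in> carrier U"
  and tP1: "\<And>p. p \<in> P \<Longrightarrow> cg U t p \<in> P" and tP2: "\<And>p. p \<in> P \<Longrightarrow> cg U (inv t) p \<in> P"
  and edge: "\<And>x. x \<in> K \<Longrightarrow> cg U (inv t) x \<in> K \<Longrightarrow> x = \<one>"
begin

lemma Hc: "H \<subseteq> carrier U" using H subgroup.subset by blast
lemma Pc: "P \<subseteq> carrier U" using P subgroup.subset by blast
lemma HcE [simp]: "h \<in> H \<Longrightarrow> h \<in> carrier U" using Hc by blast
lemma PcE [simp]: "p \<in> P \<Longrightarrow> p \<in> carrier U" using Pc by blast
lemma PHE [simp]: "p \<in> P \<Longrightarrow> p \<in> H" using PH by blast
lemma oneH [simp]: "\<one> \<in> H" by (rule subgroup.one_closed[OF H])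
lemma oneP [simp]: "\<one> \<in> P" by (rule subgroup.one_closed[OF P])
lemma mH [simp]: "a \<in> H \<Longrightarrow> b \<in> H \<Longrightarrow> a \<otimes> b \<in> H" by (rule subgroup.m_closed[OF H])
lemma iH [simp]: "a \<in> H \<Longrightarrow> inv a \<in> H" by (rule subgroup.m_inv_closed[OF H])
lemma mP [simp]: "a \<in> P \<Longrightarrow> b \<in> P \<Longrightarrow> a \<otimes> b \<in> P" by (rule subgroup.m_closed[OF P])
lemma iP [simp]: "a \<in> P \<Longrightarrow> inv a \<in> P" by (rule subgroup.m_inv_closed[OF P])

lemma K_mem: "x \<in> K \<longleftrightarrow> x \<in> P \<and> (\<forall>g\<in>H. cg U (inv g) x \<in> P)"
proof -
  have "x \<in> K \<longleftrightarrow> (\<forall>g\<in>H. x \<in> carrier U \<and> cg U (inv g) x \<in> P)"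
    unfolding Kdef normal_core_def using conj_set_mem[OF _ Pc] by auto
  also have "\<dots> \<longleftrightarrow> x \<in> P \<and> (\<forall>g\<in>H. cg U (inv g) x \<in> P)"
  proof
    assume a: "\<forall>g\<in>H. x \<in> carrier U \<and> cg U (inv g) x \<in> P"
    have "x \<in> carrier U \<and> cg U (inv \<one>) x \<in> P" using a oneH by blast
    then have xc: "x \<in> carrier U" and "cg U \<one> x \<in> P" by auto
    then have "x \<in> P" using cg_one1[OF xc] by simp
    then show "x \<in> P \<and> (\<forall>g\<in>H. cg U (inv g) x \<in> P)" using a by blast
  qed auto
  finally show ?thesis .
qed

lemma KP: "K \<subseteq> P" using K_mem by blast
lemma KPE [simp]: "k \<in> K \<Longrightarrow> k \<in> P" using KP by blast
lemma KHE [simp]: "k \<in> K \<Longrightarrow> k \<in> H" using KP PH by blast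
lemma KcE [simp]: "k \<in> K \<Longrightarrow> k \<in> carrier U" by simp

lemma K_sub: "subgroup K U"
proof (rule subgroupI)
  show "K \<subseteq> carrier U" by auto
  have "\<one> \<in> K" unfolding K_mem by simp
  then show "K \<noteq> {}" by blast
  show "inv a \<in> K" if "a \<in> K" for a
  proof -
    have a: "a \<in> P" "\<And>g. g \<in> H \<Longrightarrow> cg U (inv g) a \<in> P" using that(1) K_mem[of a] by blast+
    have "cg U (inv g) (inv a) \<in> P" if "g \<in> H" for g
      using a(2)[OF that] a(1) that by (simp add: cg_inv)
    then show ?thesis unfolding K_mem using a(1) iP by blast
  qed
  show "a \<otimes> b \<in> K" if "a \<in> K" "b \<in> K" for a b
  proof -
    have a: "a \<in> P" "\<And>g. g \<in> H \<Longrightarrow> cg U (inv g) a \<in> P" using that(1) K_mem[of a] by blast+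
    have b: "b \<in> P" "\<And>g. g \<in> H \<Longrightarrow> cg U (inv g) b \<in> P" using that(2) K_mem[of b] by blast+
    have "cg U (inv g) (a \<otimes> b) \<in> P" if "g \<in> H" for g
      using a(2)[OF that] b(2)[OF that] a(1) b(1) that by (simp add: cg_mult)
    then show ?thesis unfolding K_mem using a(1) b(1) mP by blast
  qed
qed

lemma oneK [simp]: "\<one> \<in> K" by (rule subgroup.one_closed[OF K_sub])
lemma mK [simp]: "a \<in> K \<Longrightarrow> b \<in> K \<Longrightarrow> a \<otimes> b \<in> K" by (rule subgroup.m_closed[OF K_sub])
lemma iK [simp]: "a \<in> K \<Longrightarrow> inv a \<in> K" by (rule subgroup.m_inv_closed[OF K_sub])

lemma K_norm: assumes h: "h \<in> H" and k: "k \<in> K" shows "cg U h k \<in> K"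
proof -
  have kc: "k \<in> carrier U" using k by simp
  have a: "cg U (inv g) (cg U h k) \<in> P" if g: "g \<in> H" for g
  proof -
    have "cg U (inv g) (cg U h k) = cg U (inv (inv h \<otimes> g)) k"
      using g h kc by (simp add: cg_comp inv_mult_group)
    moreover have "inv h \<otimes> g \<in> H" using g h by simp
    ultimately show ?thesis using k[unfolded K_mem] by metis
  qed
  have "cg U h k \<in> P" using a[of "\<one>"] h kc by simp
  then show ?thesis unfolding K_mem using a by blast
qed

lemma K_norm': "h \<in> H \<Longrightarrow> k \<in> K \<Longrightarrow> cg U (inv h) k \<in> K"
  using K_norm iH by blast

lemma grpH: "group (U\<lparr>carrier := H\<rparr>)" using subgroup_imp_group[OF H] .

lemma K_subH: "subgroup K (U\<lparr>carrier := H\<rparr>)"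
  by (rule subgroup_incl[OF K_sub H]) (use KP PH in blast)

lemma P_subH: "subgroup P (U\<lparr>carrier := H\<rparr>)"
  using subgroup_incl[OF P H PH] .

lemma jbij: "bij_betw j K (carrier (alt_group 4))"
  using j unfolding iso_def by simp

lemma card_K: "card K = 12"
proof -
  have "2 * card (carrier (alt_group 4)) = fact 4" by (rule alt_group_card_carrier) simp
  then have "card (carrier (alt_group 4)) = 12" by (simp add: fact_numeral)
  then show ?thesis using bij_betw_same_card[OF jbij] by simp
qed

lemma card_H: "card H = 1440"
  using group.lagrange[OF grpH K_subH] cQ card_K by (simp add: order_def)

lemma card_P: "card P = 288"
  using group.lagrange[OF grpH P_subH] cR card_H by (simp add: order_def)

end

context amal begin

definition R where "R = rcosets\<^bsub>U\<lparr>carrier := H\<rparr>\<^esub> P"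

lemma R_eq: "R = (\<lambda>a. P #> a) ` H"
  unfolding R_def RCOSETS_def by auto

lemma finR: "finite R"
proof -
  have "card R = 5" using cR R_def by simp
  then show ?thesis by (intro card_ge_0_finite) simp
qed

lemma PR: "P \<in> R"
proof -
  have "P #> \<one> = P" using Pc by simp
  then show ?thesis unfolding R_eq by (metis image_eqI oneH)
qed

lemma R_sub: "Q \<in> R \<Longrightarrow> Q \<subseteq> carrier U"
proof -
  assume "Q \<in> R"
  then obtain a where "a \<in> H" "Q = P #> a" unfolding R_eq by blast
  then show ?thesis using r_coset_subset_G[OF Pc, of a] by simp
qed

lemma ex_e: "\<exists>e. bij_betw e {1..5::nat} R \<and> e 1 = P"
proof -
  have "card {1..5::nat} = card R" using cR R_def by simp
  then obtain e0 where e0: "bij_betw e0 {1..5::nat} R"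
    using finite_same_card_bij[OF _ finR] by blast
  define i0 where "i0 = inv_into {1..5} e0 P"
  have i0: "i0 \<in> {1..5}" "e0 i0 = P"
    using bij_betwE[OF bij_betw_inv_into[OF e0]] bij_betw_inv_into_right[OF e0] PR unfolding i0_def by auto
  have tp: "transpose 1 i0 permutes {1..5}" using i0 by (intro permutes_swap_id) auto
  have "bij_betw (e0 \<circ> transpose 1 i0) {1..5} R"
    using bij_betw_trans[OF permutes_imp_bij[OF tp] e0] .
  moreover have "(e0 \<circ> transpose 1 i0) 1 = P" using i0 by simp
  ultimately show ?thesis by blast
qed

definition e where "e = (SOME e. bij_betw e {1..5::nat} R \<and> e 1 = P)"

lemma e: "bij_betw e {1..5::nat} R" "e 1 = P"
  using someI_ex[OF ex_e] unfolding e_def by auto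

definition lab where "lab = inv_into {1..5::nat} e"

lemma lab: "Q \<in> R \<Longrightarrow> lab Q \<in> {1..5}" "Q \<in> R \<Longrightarrow> e (lab Q) = Q"
  "i \<in> {1..5} \<Longrightarrow> lab (e i) = i" "i \<in> {1..5} \<Longrightarrow> e i \<in> R"
  using bij_betwE[OF bij_betw_inv_into[OF e(1)]] bij_betw_inv_into_right[OF e(1)]
    bij_betw_inv_into_left[OF e(1)] bij_betwE[OF e(1)] unfolding lab_def by auto

lemma lab1: "lab P = 1" using lab(3)[of 1] e(2) by simp

definition act where "act h Q = Q #> inv h"

lemma act_R: "h \<in> H \<Longrightarrow> Q \<in> R \<Longrightarrow> act h Q \<in> R"
proof -
  assume h: "h \<in> H" and Q: "Q \<in> R"
  then obtain a where a: "a \<in> H" "Q = P #> a" unfolding R_eq by blast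
  have "act h Q = P #> (a \<otimes> inv h)" unfolding act_def a(2) using a h
    by (simp add: coset_mult_assoc Pc)
  then show ?thesis unfolding R_eq using a h by (metis image_eqI mH iH)
qed

lemma act_mult: "h1 \<in> H \<Longrightarrow> h2 \<in> H \<Longrightarrow> Q \<in> R \<Longrightarrow> act (h1 \<otimes> h2) Q = act h1 (act h2 Q)"
  unfolding act_def using R_sub by (simp add: coset_mult_assoc inv_mult_group)

lemma act_one: "Q \<in> R \<Longrightarrow> act \<one> Q = Q"
  unfolding act_def using R_sub by simp

definition f1 where "f1 h = (\<lambda>i. if i \<in> {1..5::nat} then lab (act h (e i)) else i)"

lemma f1_in: "h \<in> H \<Longrightarrow> i \<in> {1..5} \<Longrightarrow> f1 h i \<in> {1..5}"
  unfolding f1_def using lab act_R by auto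

lemma f1_e: "h \<in> H \<Longrightarrow> i \<in> {1..5} \<Longrightarrow> e (f1 h i) = act h (e i)"
  unfolding f1_def using lab act_R by auto

lemma f1_out: "i \<notin> {1..5} \<Longrightarrow> f1 h i = i"
  unfolding f1_def by auto

lemma f1_mult: assumes "h1 \<in> H" "h2 \<in> H" shows "f1 (h1 \<otimes> h2) = f1 h1 \<circ> f1 h2"
proof
  fix i show "f1 (h1 \<otimes> h2) i = (f1 h1 \<circ> f1 h2) i"
  proof (cases "i \<in> {1..5}")
    case True
    have "f1 h1 (f1 h2 i) = lab (act h1 (e (f1 h2 i)))" using f1_in[OF assms(2) True] unfolding f1_def by simp
    also have "\<dots> = lab (act h1 (act h2 (e i)))" using f1_e[OF assms(2) True] by simp
    also have "\<dots> = lab (act (h1 \<otimes> h2) (e i))" using act_mult[OF assms lab(4)[OF True]] by simp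
    also have "\<dots> = f1 (h1 \<otimes> h2) i" using True unfolding f1_def by simp
    finally show ?thesis by simp
  next
    case False then show ?thesis by (simp add: f1_out)
  qed
qed

lemma f1_one: "f1 \<one> = id"
proof
  fix i show "f1 \<one> i = id i" unfolding f1_def using act_one lab by auto
qed

lemma f1_inv: "h \<in> H \<Longrightarrow> f1 (inv h) \<circ> f1 h = id" "h \<in> H \<Longrightarrow> f1 h \<circ> f1 (inv h) = id"
  using f1_mult[of "inv h" h] f1_mult[of h "inv h"] f1_one by simp_all

lemma f1_perm: assumes h: "h \<in> H" shows "f1 h permutes {1..5}"
proof (rule bij_imp_permutes)
  show "bij_betw (f1 h) {1..5} {1..5}"
  proof (rule bij_betwI[where g = "f1 (inv h)"])
    show "f1 h \<in> {1..5} \<rightarrow> {1..5}" using f1_in h by auto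
    show "f1 (inv h) \<in> {1..5} \<rightarrow> {1..5}" using f1_in h by auto
    show "f1 (inv h) (f1 h x) = x" for x using f1_inv(1)[OF h] by (metis comp_apply id_apply)
    show "f1 h (f1 (inv h) y) = y" for y using f1_inv(2)[OF h] by (metis comp_apply id_apply)
  qed
  show "x \<notin> {1..5} \<Longrightarrow> f1 h x = x" for x by (rule f1_out)
qed

lemma f1_K: assumes k: "k \<in> K" shows "f1 k = id"
proof
  fix i show "f1 k i = id i"
  proof (cases "i \<in> {1..5}")
    case True
    obtain a where a: "a \<in> H" "e i = P #> a" using lab(4)[OF True] unfolding R_eq by blast
    have "act k (e i) = P #> (a \<otimes> inv k)" unfolding act_def a(2) using a k
      by (simp add: coset_mult_assoc Pc)
    moreover have "P #> (a \<otimes> inv k) = P #> a"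
    proof -
      have "a \<otimes> inv k \<otimes> inv a = cg U a (inv k)" by (simp add: cg_def)
      moreover have "cg U a (inv k) \<in> P" using K_norm[OF a(1) iK[OF k]] by simp
      ultimately show ?thesis using rcos_eq_iff[OF P] a k by simp
    qed
    ultimately have "act k (e i) = e i" using a by simp
    then show ?thesis unfolding f1_def using True lab(3) by simp
  qed (simp add: f1_out)
qed

lemma f1_id_K: assumes h: "h \<in> H" and f: "f1 h = id" shows "h \<in> K"
proof -
  have c: "cg U a h \<in> P" if a: "a \<in> H" for a
  proof -
    have Q: "P #> a \<in> R" unfolding R_eq using a by blast
    have "e (f1 h (lab (P #> a))) = act h (P #> a)" using f1_e[OF h lab(1)[OF Q]] lab(2)[OF Q] by simp
    then have "P #> a = P #> a #> inv h" using f lab(2)[OF Q] unfolding act_def by simp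
    also have "\<dots> = P #> (a \<otimes> inv h)" using a h by (simp add: coset_mult_assoc Pc)
    finally have "a \<otimes> inv h \<otimes> inv a \<in> P" using rcos_eq_iff[OF P, of "a \<otimes> inv h" a] a h by simp
    moreover have "a \<otimes> inv h \<otimes> inv a = inv (cg U a h)" using a h by (simp add: cg_def inv_mult_group m_assoc)
    ultimately have "inv (cg U a h) \<in> P" by simp
    then have "inv (inv (cg U a h)) \<in> P" by (rule iP)
    then show ?thesis using a h by simp
  qed
  have "h \<in> P" using c[of \<one>] h by simp
  moreover have "\<forall>g\<in>H. cg U (inv g) h \<in> P" using c by simp
  ultimately show ?thesis unfolding K_mem by blast
qed

lemma f1_fix1: assumes h: "h \<in> H" shows "f1 h 1 = 1 \<longleftrightarrow> h \<in> P"
proof -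
  have "f1 h 1 = 1 \<longleftrightarrow> act h P = P"
  proof
    assume "f1 h 1 = 1" then show "act h P = P" using f1_e[OF h, of 1] e(2) by simp
  next
    assume a: "act h P = P"
    have "f1 h 1 = lab (act h P)" unfolding f1_def using e(2) by simp
    then show "f1 h 1 = 1" using a lab1 by simp
  qed
  also have "act h P = P \<longleftrightarrow> P #> inv h = P #> \<one>" unfolding act_def using Pc by simp
  also have "\<dots> \<longleftrightarrow> inv h \<in> P" using rcos_eq_iff[OF P, of "inv h" \<one>] h by simp
  also have "\<dots> \<longleftrightarrow> h \<in> P" using iP h by (metis HcE inv_inv)
  finally show ?thesis .
qed

lemma f1_eq_iff: assumes x: "x \<in> H" and y: "y \<in> H" shows "f1 x = f1 y \<longleftrightarrow> x \<otimes> inv y \<in> K"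
proof
  assume "f1 x = f1 y"
  then have "f1 (x \<otimes> inv y) = id" using f1_mult[OF x iH[OF y]] f1_inv(2)[OF y] by simp
  then show "x \<otimes> inv y \<in> K" by (rule f1_id_K[OF mH[OF x iH[OF y]]])
next
  assume "x \<otimes> inv y \<in> K"
  then have "f1 (x \<otimes> inv y) = id" by (rule f1_K)
  moreover have "x = (x \<otimes> inv y) \<otimes> y" using x y by (simp add: m_assoc)
  ultimately show "f1 x = f1 y" using f1_mult[of "x \<otimes> inv y" y] x y by (metis mH iH comp_id id_comp)
qed

lemma f1_surj: assumes s: "\<sigma> permutes {1..5::nat}" shows "\<exists>h\<in>H. f1 h = \<sigma>"
proof -
  have "card (f1 ` H) = card ((\<lambda>h. K #> h) ` H)"
  proof (rule same_fibres_card)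
    fix x y assume "x \<in> H" "y \<in> H"
    then show "f1 x = f1 y \<longleftrightarrow> K #> x = K #> y"
      using f1_eq_iff rcos_eq_iff[OF K_sub] by simp
  qed
  also have "(\<lambda>h. K #> h) ` H = rcosets\<^bsub>U\<lparr>carrier := H\<rparr>\<^esub> K" unfolding RCOSETS_def by auto
  finally have c: "card (f1 ` H) = 120" using cQ by simp
  have sub: "f1 ` H \<subseteq> {\<sigma>. \<sigma> permutes {1..5::nat}}" using f1_perm by auto
  have "card {\<sigma>. \<sigma> permutes {1..5::nat}} = 120"
    using card_permutations[of "{1..5::nat}" 5] by (simp add: fact_numeral)
  then have "f1 ` H = {\<sigma>. \<sigma> permutes {1..5::nat}}"
    using card_subset_eq[OF finite_permutations[of "{1..5::nat}"] sub] c by simp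
  then have "\<sigma> \<in> f1 ` H" using s by simp
  then show ?thesis by (auto simp: image_iff)
qed

end

lemma St_comp: "\<sigma> \<in> St i \<Longrightarrow> \<tau> \<in> St i \<Longrightarrow> \<sigma> \<circ> \<tau> \<in> St i"
  unfolding St_mem
  by (auto intro: permutes_compose simp: evenperm_comp permutes_perm)

lemma St_id: "id \<in> St i" unfolding St_mem by (simp add: permutes_id)

lemma St_alt: "St i \<subseteq> carrier (alt_group 4)" by (auto simp: St_mem alt_group_carrier)

context amal begin

lemma jhom: "j \<in> hom (U\<lparr>carrier := K\<rparr>) (alt_group 4)" using j unfolding iso_def by simp

lemma jmul: "a \<in> K \<Longrightarrow> b \<in> K \<Longrightarrow> j (a \<otimes> b) = j a \<circ> j b"
  using hom_mult[OF jhom, of a b] by (simp add: alt_group_mult)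

lemma jK: "a \<in> K \<Longrightarrow> j a \<in> carrier (alt_group 4)"
  using bij_betwE[OF jbij] by blast

lemma jperm: "a \<in> K \<Longrightarrow> j a permutes {1..4}"
  using jK by (simp add: alt_group_carrier)

lemma jinj: "a \<in> K \<Longrightarrow> b \<in> K \<Longrightarrow> j a = j b \<Longrightarrow> a = b"
  using jbij unfolding bij_betw_def inj_on_def by blast

lemma jsurj: "\<sigma> \<in> carrier (alt_group 4) \<Longrightarrow> \<exists>k\<in>K. j k = \<sigma>"
  using jbij unfolding bij_betw_def by (metis imageE)

lemma jone: "j \<one> = id"
proof -
  have "j \<one> \<circ> j \<one> = j \<one> \<circ> id" using jmul[of \<one> \<one>] by simp
  then show ?thesis using perm_cancel_left[OF jperm[OF oneK]] by blast
qed

lemma jinv: assumes a: "a \<in> K" shows "j (inv a) = inv' (j a)"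
proof -
  have "j (inv a) \<circ> j a = id" using jmul[OF iK[OF a] a] a jone by simp
  also have "id = inv' (j a) \<circ> j a" using permutes_inv_o(2)[OF jperm[OF a]] by simp
  finally show ?thesis using perm_cancel_right[OF jperm[OF a]] by blast
qed

lemma jcg: "k \<in> K \<Longrightarrow> x \<in> K \<Longrightarrow> j (cg U k x) = j k \<circ> j x \<circ> inv' (j k)"
  unfolding cg_def using jmul jinv by simp

definition T where "T i = {k \<in> K. j k \<in> St i}"

lemma T_sub: "T i \<subseteq> K" unfolding T_def by auto

lemma jT: "j ` T i = St i"
proof
  show "j ` T i \<subseteq> St i" unfolding T_def by auto
  show "St i \<subseteq> j ` T i"
  proof
    fix \<sigma> assume s: "\<sigma> \<in> St i"
    then obtain k where "k \<in> K" "j k = \<sigma>" using jsurj St_alt by blast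
    then show "\<sigma> \<in> j ` T i" using s unfolding T_def by blast
  qed
qed

lemma T_inj: "i \<in> {1..4} \<Longrightarrow> i' \<in> {1..4} \<Longrightarrow> T i = T i' \<Longrightarrow> i = i'"
  using jT St_distinct by metis

lemma T_one: "\<one> \<in> T i" unfolding T_def using jone St_id by simp

lemma T_mult: "a \<in> T i \<Longrightarrow> b \<in> T i \<Longrightarrow> a \<otimes> b \<in> T i"
  unfolding T_def using jmul St_comp by simp

lemma T_card: "i \<in> {1..4} \<Longrightarrow> card (T i) = 3"
proof -
  assume i: "i \<in> {1..4}"
  have "inj_on j (T i)" using jinj T_sub unfolding inj_on_def by blast
  then have "card (T i) = card (j ` T i)" by (simp add: card_image)
  then show ?thesis using jT card_St[OF i] by simp
qed

definition cjs where "cjs h Y = (\<lambda>k. cg U h k) ` Y"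

lemma cjs_K: "h \<in> H \<Longrightarrow> Y \<subseteq> K \<Longrightarrow> cjs h Y \<subseteq> K"
  unfolding cjs_def using K_norm by auto

lemma cjs_mult: assumes "h1 \<in> carrier U" "h2 \<in> carrier U" "Y \<subseteq> carrier U"
  shows "cjs (h1 \<otimes> h2) Y = cjs h1 (cjs h2 Y)"
  unfolding cjs_def image_image
proof (rule image_cong[OF refl])
  fix x assume "x \<in> Y"
  then show "cg U (h1 \<otimes> h2) x = cg U h1 (cg U h2 x)" using assms cg_comp by blast
qed

lemma cjs_one: assumes "Y \<subseteq> carrier U" shows "cjs \<one> Y = Y"
proof -
  have "(\<lambda>k. cg U \<one> k) ` Y = (\<lambda>k. k) ` Y"
  proof (rule image_cong[OF refl])
    fix x assume "x \<in> Y" then show "cg U \<one> x = x" using assms by auto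
  qed
  then show ?thesis unfolding cjs_def by simp
qed

lemma cjs_inj: "h \<in> carrier U \<Longrightarrow> Y \<subseteq> carrier U \<Longrightarrow> Z \<subseteq> carrier U \<Longrightarrow> cjs h Y = cjs h Z \<Longrightarrow> Y = Z"
proof -
  assume h: "h \<in> carrier U" and Y: "Y \<subseteq> carrier U" and Z: "Z \<subseteq> carrier U" and e: "cjs h Y = cjs h Z"
  have "cjs (inv h) (cjs h Y) = cjs (inv h) (cjs h Z)" using e by simp
  moreover have "cjs (inv h) (cjs h Y) = Y" using cjs_mult[of "inv h" h Y] cjs_one[OF Y] h Y by simp
  moreover have "cjs (inv h) (cjs h Z) = Z" using cjs_mult[of "inv h" h Z] cjs_one[OF Z] h Z by simp
  ultimately show ?thesis by simp
qed

lemma T_carrier: "T i \<subseteq> carrier U" using T_sub KcE by blast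

lemma conj_T: assumes h: "h \<in> H" and i: "i \<in> {1..4}" shows "\<exists>i'\<in>{1..4}. cjs h (T i) = T i'"
proof -
  define Y where "Y = cjs h (T i)"
  have YK: "Y \<subseteq> K" unfolding Y_def using cjs_K[OF h T_sub] .
  have sub: "j ` Y \<subseteq> carrier (alt_group 4)" using YK jK by auto
  have cl: "a \<circ> b \<in> j ` Y" if ab: "a \<in> j ` Y" "b \<in> j ` Y" for a b
  proof -
    obtain x where x: "x \<in> T i" "a = j (cg U h x)" using ab(1) unfolding Y_def cjs_def by blast
    obtain y where y: "y \<in> T i" "b = j (cg U h y)" using ab(2) unfolding Y_def cjs_def by blast
    have xy: "x \<in> T i" "y \<in> T i" "a = j (cg U h x)" "b = j (cg U h y)" using x y by auto
    have xyK: "x \<in> K" "y \<in> K" using xy T_sub by auto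
    have "a \<circ> b = j (cg U h x \<otimes> cg U h y)" using xy xyK K_norm[OF h] jmul by simp
    also have "\<dots> = j (cg U h (x \<otimes> y))" using xyK h by (simp add: cg_mult)
    finally show ?thesis unfolding Y_def cjs_def using T_mult[OF xy(1,2)] by blast
  qed
  have idY: "id \<in> j ` Y"
  proof -
    have "cg U h \<one> = \<one>" using h by simp
    then have "\<one> \<in> Y" unfolding Y_def cjs_def using T_one by force
    then show ?thesis using jone by force
  qed
  have cY: "card (j ` Y) = 3"
  proof -
    have "inj_on j Y" using jinj YK unfolding inj_on_def by blast
    then have "card (j ` Y) = card Y" by (simp add: card_image)
    also have "card Y = card (T i)" unfolding Y_def cjs_def
    proof (rule card_image, rule inj_onI)
      fix x y assume "x \<in> T i" "y \<in> T i" "cg U h x = cg U h y"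
      then show "x = y" using cg_inj[of h x y] T_carrier[of i] HcE[OF h] by blast
    qed
    finally show ?thesis using T_card[OF i] by simp
  qed
  obtain i' where i': "i' \<in> {1..4}" "j ` Y = St i'" using sub3[OF sub cl idY cY] by blast
  have "Y = T i'"
  proof
    show "Y \<subseteq> T i'" using YK i'(2) unfolding T_def by auto
    show "T i' \<subseteq> Y"
    proof
      fix k assume k: "k \<in> T i'"
      then have "j k \<in> j ` Y" using i'(2) unfolding T_def by auto
      then obtain y where "y \<in> Y" "j k = j y" by blast
      then show "k \<in> Y" using jinj YK k T_sub by blast
    qed
  qed
  then show ?thesis using i' unfolding Y_def by blast
qed

definition f2 where
  "f2 h = (\<lambda>i. if i \<in> {1..4::nat} then (THE i'. i' \<in> {1..4} \<and> cjs h (T i) = T i') else i)"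

lemma f2_spec: assumes h: "h \<in> H" and i: "i \<in> {1..4}"
  shows "f2 h i \<in> {1..4} \<and> cjs h (T i) = T (f2 h i)"
proof -
  have ex: "\<exists>!i'. i' \<in> {1..4} \<and> cjs h (T i) = T i'"
    using conj_T[OF h i] T_inj by metis
  show ?thesis unfolding f2_def using theI'[OF ex] i by simp
qed

lemma f2_unique: "h \<in> H \<Longrightarrow> i \<in> {1..4} \<Longrightarrow> i' \<in> {1..4} \<Longrightarrow> cjs h (T i) = T i' \<Longrightarrow> f2 h i = i'"
  using f2_spec T_inj by metis

lemma f2_out: assumes "i \<notin> {1..4}" shows "f2 h i = i"
  unfolding f2_def using assms by (rule if_not_P)

lemma f2_mult: assumes h1: "h1 \<in> H" and h2: "h2 \<in> H" shows "f2 (h1 \<otimes> h2) = f2 h1 \<circ> f2 h2"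
proof
  fix i show "f2 (h1 \<otimes> h2) i = (f2 h1 \<circ> f2 h2) i"
  proof (cases "i \<in> {1..4}")
    case True
    have a: "f2 h2 i \<in> {1..4}" "cjs h2 (T i) = T (f2 h2 i)" using f2_spec[OF h2 True] by auto
    have b: "f2 h1 (f2 h2 i) \<in> {1..4}" "cjs h1 (T (f2 h2 i)) = T (f2 h1 (f2 h2 i))"
      using f2_spec[OF h1 a(1)] by auto
    have "cjs (h1 \<otimes> h2) (T i) = T (f2 h1 (f2 h2 i))"
      using cjs_mult[OF _ _ T_carrier, of h1 h2 i] h1 h2 a b by simp
    then show ?thesis using f2_unique[OF mH[OF h1 h2] True b(1)] by simp
  qed (simp add: f2_out)
qed

lemma f2_centr: assumes x: "x \<in> H" and c: "\<And>k. k \<in> K \<Longrightarrow> x \<otimes> k = k \<otimes> x" shows "f2 x = id"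
proof
  fix i show "f2 x i = id i"
  proof (cases "i \<in> {1..4}")
    case True
    have "cjs x (T i) = T i"
    proof -
      have "\<And>k. k \<in> T i \<Longrightarrow> cg U x k = k" using c T_sub x cg_fix_iff by (metis HcE KcE subsetD)
      then show ?thesis unfolding cjs_def by (auto simp: image_iff)
    qed
    then show ?thesis using f2_unique[OF x True True] by simp
  qed (simp add: f2_out)
qed

lemma f2_one: "f2 \<one> = id" using f2_centr[OF oneH] by simp

lemma f2_inv: "h \<in> H \<Longrightarrow> f2 (inv h) \<circ> f2 h = id" "h \<in> H \<Longrightarrow> f2 h \<circ> f2 (inv h) = id"
  using f2_mult[of "inv h" h] f2_mult[of h "inv h"] f2_one by simp_all

lemma f2_in: "h \<in> H \<Longrightarrow> i \<in> {1..4} \<Longrightarrow> f2 h i \<in> {1..4}" using f2_spec by blast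

lemma f2_perm: assumes h: "h \<in> H" shows "f2 h permutes {1..4}"
proof (rule bij_imp_permutes)
  show "bij_betw (f2 h) {1..4} {1..4}"
  proof (rule bij_betwI[where g = "f2 (inv h)"])
    show "f2 h \<in> {1..4} \<rightarrow> {1..4}" using f2_in h by auto
    show "f2 (inv h) \<in> {1..4} \<rightarrow> {1..4}" using f2_in h by auto
    show "f2 (inv h) (f2 h x) = x" for x using f2_inv(1)[OF h] by (metis comp_apply id_apply)
    show "f2 h (f2 (inv h) y) = y" for y using f2_inv(2)[OF h] by (metis comp_apply id_apply)
  qed
  show "x \<notin> {1..4} \<Longrightarrow> f2 h x = x" for x by (rule f2_out)
qed

lemma f2_K: assumes k: "k \<in> K" shows "f2 k = j k"
proof
  fix i show "f2 k i = j k i"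
  proof (cases "i \<in> {1..4}")
    case True
    have jki: "j k i \<in> {1..4}" using permutes_in_image[OF jperm[OF k]] True by blast
    have "j ` cjs k (T i) = (\<lambda>x. j k \<circ> j x \<circ> inv' (j k)) ` T i"
      unfolding cjs_def image_image by (rule image_cong[OF refl]) (use jcg[OF k] T_sub in blast)
    also have "\<dots> = (\<lambda>\<sigma>. j k \<circ> \<sigma> \<circ> inv' (j k)) ` (j ` T i)" by (simp add: image_image)
    also have "\<dots> = St (j k i)" using St_conj[OF jperm[OF k]] jT by simp
    also have "\<dots> = j ` T (j k i)" using jT by simp
    finally have "cjs k (T i) = T (j k i)"
      using inj_on_image_eq_iff[of j K] jinj cjs_K[OF KHE[OF k] T_sub] T_sub
      unfolding inj_on_def by metis
    then show ?thesis using f2_unique[OF KHE[OF k] True jki] by simp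
  next
    case False then show ?thesis using f2_out permutes_not_in[OF jperm[OF k]] by simp
  qed
qed

lemma f2_ker_comm: assumes c: "c \<in> H" "f2 c = id" and k: "k \<in> K" shows "c \<otimes> k = k \<otimes> c"
proof -
  have ck: "cg U c k \<in> K" using K_norm c k by simp
  have fi: "f2 (inv c) = id" using f2_inv(1)[OF c(1)] c(2) by simp
  have "f2 (cg U c k) = f2 c \<circ> f2 k \<circ> f2 (inv c)"
    unfolding cg_def using f2_mult c k by simp
  then have "j (cg U c k) = j k" using f2_K[OF ck] f2_K[OF k] c(2) fi by simp
  then have "cg U c k = k" using jinj ck k by blast
  then show ?thesis using cg_fix_iff c k by simp
qed

end

lemma (in group) comm_mult:
  assumes "e \<in> carrier G" "a \<in> carrier G" "b \<in> carrier G" "e \<otimes> a = a \<otimes> e" "e \<otimes> b = b \<otimes> e"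
  shows "e \<otimes> (a \<otimes> b) = (a \<otimes> b) \<otimes> e"
proof -
  have "e \<otimes> (a \<otimes> b) = (e \<otimes> a) \<otimes> b" by (rule m_assoc[symmetric]) (use assms in auto)
  also have "\<dots> = (a \<otimes> e) \<otimes> b" by (simp only: assms(4))
  also have "\<dots> = a \<otimes> (e \<otimes> b)" by (rule m_assoc) (use assms in auto)
  also have "\<dots> = a \<otimes> (b \<otimes> e)" by (simp only: assms(5))
  also have "\<dots> = (a \<otimes> b) \<otimes> e" by (rule m_assoc[symmetric]) (use assms in auto)
  finally show ?thesis .
qed

context amal begin

definition C where "C = {c \<in> H. f2 c = id}"

lemma C_mem: "c \<in> C \<longleftrightarrow> c \<in> H \<and> f2 c = id" unfolding C_def by simp

lemma CHE [simp]: "c \<in> C \<Longrightarrow> c \<in> H" unfolding C_def by simp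

lemma C_sub: "subgroup C U"
proof (rule subgroupI)
  show "C \<subseteq> carrier U" unfolding C_def by auto
  show "C \<noteq> {}" using f2_one oneH unfolding C_def by blast
  show "inv a \<in> C" if "a \<in> C" for a
    using that f2_inv(1)[of a] unfolding C_def by simp
  show "a \<otimes> b \<in> C" if "a \<in> C" "b \<in> C" for a b
    using that f2_mult[of a b] unfolding C_def by simp
qed

lemma finC: "finite C" using finH finite_subset[of C H] CHE by blast

lemma finK: "finite K" by (rule card_ge_0_finite) (simp add: card_K)

lemma KC: "K \<inter> C = {\<one>}"
proof
  show "K \<inter> C \<subseteq> {\<one>}"
  proof
    fix k assume "k \<in> K \<inter> C"
    then have k: "k \<in> K" "f2 k = id" unfolding C_def by auto
    then have "j k = j \<one>" using f2_K jone by simp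
    then show "k \<in> {\<one>}" using jinj k by simp
  qed
  show "{\<one>} \<subseteq> K \<inter> C" using f2_one unfolding C_def by simp
qed

lemma C_comm: "c \<in> C \<Longrightarrow> k \<in> K \<Longrightarrow> c \<otimes> k = k \<otimes> c"
  using f2_ker_comm unfolding C_def by blast

lemma dec_even: assumes h: "h \<in> H" and ev: "evenperm (f2 h)"
  shows "\<exists>k\<in>K. \<exists>c\<in>C. h = k \<otimes> c"
proof -
  have "f2 h \<in> carrier (alt_group 4)" using f2_perm[OF h] ev by (simp add: alt_group_carrier)
  then obtain k where k: "k \<in> K" "j k = f2 h" using jsurj by blast
  have "f2 (inv k \<otimes> h) = f2 (inv k) \<circ> f2 h" using f2_mult k h by simp
  also have "\<dots> = inv' (j k) \<circ> j k" using f2_K[OF iK[OF k(1)]] jinv[OF k(1)] k(2) by simp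
  also have "\<dots> = id" using permutes_inv_o(2)[OF jperm[OF k(1)]] .
  finally have "inv k \<otimes> h \<in> C" unfolding C_def using k h by simp
  moreover have "h = k \<otimes> (inv k \<otimes> h)" using k h by simp
  ultimately show ?thesis using k by blast
qed

lemma even_KC: "k \<in> K \<Longrightarrow> c \<in> C \<Longrightarrow> evenperm (f2 (k \<otimes> c))"
  using f2_mult[of k c] f2_K[of k] jK[of k] unfolding C_def by (simp add: alt_group_carrier)

lemma f1_C_inj: assumes "c \<in> C" "c' \<in> C" "f1 c = f1 c'" shows "c = c'"
proof -
  have cH: "c \<in> H" "c' \<in> H" using assms by auto
  have "c \<otimes> inv c' \<in> K" using f1_eq_iff[OF cH, THEN iffD1] assms(3) .
  moreover have "c \<otimes> inv c' \<in> C"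
    using subgroup.m_closed[OF C_sub assms(1) subgroup.m_inv_closed[OF C_sub assms(2)]] .
  ultimately have e: "c \<otimes> inv c' = \<one>" using KC by blast
  have "c = (c \<otimes> inv c') \<otimes> c'" using cH by (simp add: m_assoc)
  also have "\<dots> = c'" using e cH by simp
  finally show ?thesis .
qed

lemma f2_inv_odd: "h \<in> H \<Longrightarrow> \<not> evenperm (f2 h) \<Longrightarrow> \<not> evenperm (f2 (inv h))"
proof -
  assume h: "h \<in> H" and o: "\<not> evenperm (f2 h)"
  have "evenperm (f2 (inv h) \<circ> f2 h) = True" using f2_inv(1)[OF h] by simp
  then show ?thesis using o evenperm_comp[OF permutes_perm[OF f2_perm[OF iH[OF h]]] permutes_perm[OF f2_perm[OF h]]]
    by simp
qed

lemma good_case: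
  assumes h0: "h0 \<in> H" "\<not> evenperm (f2 h0)"
  shows "\<forall>h\<in>H. evenperm (f1 h) = evenperm (f2 h)"
proof -
  define He where "He = {h \<in> H. evenperm (f2 h)}"
  define Ho where "Ho = {h \<in> H. \<not> evenperm (f2 h)}"
  have He_eq: "He = {k \<otimes> c | k c. k \<in> K \<and> c \<in> C}"
  proof
    show "He \<subseteq> {k \<otimes> c | k c. k \<in> K \<and> c \<in> C}" unfolding He_def using dec_even by blast
    show "{k \<otimes> c | k c. k \<in> K \<and> c \<in> C} \<subseteq> He" unfolding He_def using even_KC by auto
  qed
  have cHe: "card He = 12 * card C"
    unfolding He_eq using card_mult_trivial[OF K_sub C_sub KC finK finC] card_K by simp
  have Ho_eq: "Ho = (\<lambda>h. h0 \<otimes> h) ` He"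
  proof
    show "Ho \<subseteq> (\<lambda>h. h0 \<otimes> h) ` He"
    proof
      fix x assume x: "x \<in> Ho"
      then have xH: "x \<in> H" "\<not> evenperm (f2 x)" unfolding Ho_def by auto
      have "evenperm (f2 (inv h0 \<otimes> x))"
        using f2_mult[OF iH[OF h0(1)] xH(1)] f2_inv_odd[OF h0] xH
          evenperm_comp[OF permutes_perm[OF f2_perm[OF iH[OF h0(1)]]] permutes_perm[OF f2_perm[OF xH(1)]]]
        by simp
      then have "inv h0 \<otimes> x \<in> He" unfolding He_def using h0 xH by simp
      moreover have "x = h0 \<otimes> (inv h0 \<otimes> x)" using h0 xH by simp
      ultimately show "x \<in> (\<lambda>h. h0 \<otimes> h) ` He" by blast
    qed
    show "(\<lambda>h. h0 \<otimes> h) ` He \<subseteq> Ho"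
    proof
      fix x assume "x \<in> (\<lambda>h. h0 \<otimes> h) ` He"
      then obtain y where y: "y \<in> H" "evenperm (f2 y)" "x = h0 \<otimes> y" unfolding He_def by auto
      have "\<not> evenperm (f2 x)"
        using f2_mult[OF h0(1) y(1)] h0 y
          evenperm_comp[OF permutes_perm[OF f2_perm[OF h0(1)]] permutes_perm[OF f2_perm[OF y(1)]]]
        by simp
      then show "x \<in> Ho" unfolding Ho_def using y h0 by simp
    qed
  qed
  have "card Ho = card He" unfolding Ho_eq
  proof (rule card_image, rule inj_onI)
    fix x y assume "x \<in> He" "y \<in> He" "h0 \<otimes> x = h0 \<otimes> y"
    then show "x = y" using h0 unfolding He_def by (metis HcE l_cancel mem_Collect_eq)
  qed
  moreover have "card H = card He + card Ho"
  proof -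
    have "H = He \<union> Ho" "He \<inter> Ho = {}" unfolding He_def Ho_def by auto
    moreover have "finite He" "finite Ho" using finH unfolding He_def Ho_def by auto
    ultimately show ?thesis using card_Un_disjoint by metis
  qed
  ultimately have cC: "card C = 60" using cHe card_H by simp
  have sub1: "subgroup (f1 ` C) (sym_group 5)"
  proof (rule group.subgroupI[OF sym_group_is_group])
    show "f1 ` C \<subseteq> carrier (sym_group 5)" using f1_perm by (auto simp: sym_group_carrier)
    show "f1 ` C \<noteq> {}" using f1_one C_sub subgroup.one_closed by blast
    show "inv\<^bsub>sym_group 5\<^esub> a \<in> f1 ` C" if aC: "a \<in> f1 ` C" for a
    proof -
      obtain c where c: "c \<in> C" "a = f1 c" using aC by blast
      have "a \<in> carrier (sym_group 5)" using c f1_perm by (simp add: sym_group_carrier)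
      then have "inv\<^bsub>sym_group 5\<^esub> a = inv' a" by simp
      also have "\<dots> = f1 (inv c)"
      proof -
        have cH: "c \<in> H" using c by simp
        have eq: "f1 (inv c) \<circ> f1 c = inv' (f1 c) \<circ> f1 c"
          using f1_inv(1)[OF cH] permutes_inv_o(2)[OF f1_perm[OF cH]] by simp
        have "f1 (inv c) = inv' (f1 c)" by (rule perm_cancel_right[OF f1_perm[OF cH] eq])
        then show ?thesis using c(2) by simp
      qed
      finally show ?thesis using imageI[OF subgroup.m_inv_closed[OF C_sub c(1)], of f1] by simp
    qed
    show "a \<otimes>\<^bsub>sym_group 5\<^esub> b \<in> f1 ` C" if abC: "a \<in> f1 ` C" "b \<in> f1 ` C" for a b
    proof -
      obtain c c' where c: "c \<in> C" "a = f1 c" "c' \<in> C" "b = f1 c'" using abC by blast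
      have "a \<otimes>\<^bsub>sym_group 5\<^esub> b = f1 (c \<otimes> c')" using c f1_mult by (simp add: sym_group_mult)
      then show ?thesis using imageI[OF subgroup.m_closed[OF C_sub c(1) c(3)], of f1] by simp
    qed
  qed
  have "card (f1 ` C) = 60"
  proof -
    have "inj_on f1 C" by (rule inj_onI) (rule f1_C_inj)
    then show ?thesis using cC by (simp add: card_image)
  qed
  then have A5: "f1 ` C = carrier (alt_group 5)" using sub60[OF sub1] by simp
  show ?thesis
  proof
    fix h assume h: "h \<in> H"
    show "evenperm (f1 h) = evenperm (f2 h)"
    proof (cases "evenperm (f2 h)")
      case True
      then obtain k c where kc: "k \<in> K" "c \<in> C" "h = k \<otimes> c" using dec_even h by blast
      have "f1 h = f1 c" using f1_mult[of k c] f1_K[OF kc(1)] kc by simp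
      moreover have "f1 c \<in> carrier (alt_group 5)" using A5 kc by blast
      ultimately show ?thesis using True by (simp add: alt_group_carrier)
    next
      case False
      have "\<not> evenperm (f1 h)"
      proof
        assume ev: "evenperm (f1 h)"
        then have "f1 h \<in> f1 ` C" using A5 f1_perm[OF h] by (simp add: alt_group_carrier)
        then obtain c where c: "c \<in> C" "f1 h = f1 c" by blast
        then have k: "h \<otimes> inv c \<in> K" using f1_eq_iff h by simp
        have "h = (h \<otimes> inv c) \<otimes> c" using h c by (simp add: m_assoc)
        then have "evenperm (f2 h)" using even_KC[OF k c(1)] by simp
        then show False using False by simp
      qed
      then show ?thesis using False by simp
    qed
  qed
qed

end

locale amal_bad = amal +
  assumes all: "\<And>h. h \<in> H \<Longrightarrow> evenperm (f2 h)"
begin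

lemma tc [simp]: "t \<in> carrier U" using t .
lemma tinv [simp]: "inv t \<in> carrier U" by simp

definition K' where "K' = {x \<in> carrier U. cg U (inv t) x \<in> K}"
definition D where "D = C \<inter> P"
definition D' where "D' = {x \<in> carrier U. cg U (inv t) x \<in> D}"
definition E where "E = D \<inter> D'"

lemma K'_sub: "subgroup K' U" unfolding K'_def by (rule preimage_subgroup[OF K_sub tinv])
lemma D_sub: "subgroup D U" unfolding D_def by (rule subgroup_Int[OF C_sub P])
lemma D'_sub: "subgroup D' U" unfolding D'_def by (rule preimage_subgroup[OF D_sub tinv])
lemma E_sub: "subgroup E U" unfolding E_def by (rule subgroup_Int[OF D_sub D'_sub])

lemma K'c: "x \<in> K' \<Longrightarrow> x \<in> carrier U" unfolding K'_def by simp
lemma D'c: "x \<in> D' \<Longrightarrow> x \<in> carrier U" unfolding D'_def by simp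

lemma K'_P: assumes x: "x \<in> K'" shows "x \<in> P"
proof -
  have xc: "x \<in> carrier U" and k: "cg U (inv t) x \<in> K" using x unfolding K'_def by auto
  have "cg U t (cg U (inv t) x) \<in> P" using tP1 k by simp
  then show ?thesis using xc by simp
qed

lemma K'_mem_cg: assumes k: "k \<in> K" shows "cg U t k \<in> K'"
  unfolding K'_def using k by simp

lemma comm_KK': assumes k: "k \<in> K" and x: "x \<in> K'" shows "k \<otimes> x = x \<otimes> k"
proof -
  have kc: "k \<in> carrier U" using k by simp
  have xc: "x \<in> carrier U" using K'c[OF x] .
  have xH: "x \<in> H" using K'_P[OF x] by simp
  have xk: "cg U (inv t) x \<in> K" using x unfolding K'_def by simp
  define z where "z = cg U k x \<otimes> inv x"
  have zc: "z \<in> carrier U" unfolding z_def using kc xc by simp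
  have "z = k \<otimes> cg U x (inv k)" unfolding z_def cg_def using kc xc by (simp add: m_assoc)
  moreover have "cg U x (inv k) \<in> K" using K_norm[OF xH iK[OF k]] .
  ultimately have zK: "z \<in> K" using k by simp
  have "cg U (inv t) z = cg U (inv t) (cg U k x) \<otimes> inv (cg U (inv t) x)"
    unfolding z_def using kc xc by (simp add: cg_mult cg_inv)
  also have "cg U (inv t) (cg U k x) = cg U (cg U (inv t) k) (cg U (inv t) x)"
    using kc xc by (intro cg_cg) simp_all
  finally have e: "cg U (inv t) z = cg U (cg U (inv t) k) (cg U (inv t) x) \<otimes> inv (cg U (inv t) x)" .
  have "cg U (inv t) k \<in> H" using tP2[of k] k by simp
  then have "cg U (cg U (inv t) k) (cg U (inv t) x) \<in> K" using K_norm xk by blast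
  then have "cg U (inv t) z \<in> K" unfolding e using xk by simp
  then have "z = \<one>" by (rule edge[OF zK])
  then have "cg U k x = x"
  proof -
    assume z1: "z = \<one>"
    have "cg U k x = z \<otimes> x" unfolding z_def using kc xc by (simp add: m_assoc)
    then show ?thesis using z1 xc by simp
  qed
  then show ?thesis using cg_fix_iff kc xc by simp
qed

lemma K'_C: assumes x: "x \<in> K'" shows "x \<in> C"
proof -
  have xH: "x \<in> H" using K'_P[OF x] by simp
  have "x \<otimes> k = k \<otimes> x" if "k \<in> K" for k using comm_KK'[OF that x] by (rule sym)
  then have "f2 x = id" by (rule f2_centr[OF xH])
  then show ?thesis unfolding C_def using xH by simp
qed

lemma K'_D: "x \<in> K' \<Longrightarrow> x \<in> D" unfolding D_def using K'_C K'_P by simp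

lemma D_C: "x \<in> D \<Longrightarrow> x \<in> C" unfolding D_def by simp
lemma D_P: "x \<in> D \<Longrightarrow> x \<in> P" unfolding D_def by simp

lemma D'_P: assumes x: "x \<in> D'" shows "x \<in> P"
proof -
  have xc: "x \<in> carrier U" and d: "cg U (inv t) x \<in> D" using x unfolding D'_def by auto
  have "cg U t (cg U (inv t) x) \<in> P" using tP1 D_P[OF d] by simp
  then show ?thesis using xc by simp
qed

lemma K_D': assumes k: "k \<in> K" shows "k \<in> D'"
proof -
  have kc: "k \<in> carrier U" using k by simp
  define y where "y = cg U (inv t) k"
  have yP: "y \<in> P" unfolding y_def using tP2 k by simp
  have yH: "y \<in> H" using yP by simp
  have "y \<otimes> k2 = k2 \<otimes> y" if k2: "k2 \<in> K" for k2
  proof -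
    have k2c: "k2 \<in> carrier U" using k2 by simp
    have "k \<otimes> cg U t k2 = cg U t k2 \<otimes> k" using comm_KK'[OF k K'_mem_cg[OF k2]] .
    then have "cg U (inv t) k \<otimes> cg U (inv t) (cg U t k2) = cg U (inv t) (cg U t k2) \<otimes> cg U (inv t) k"
      using cg_commute[of "inv t" k "cg U t k2"] kc k2c by simp
    then show ?thesis unfolding y_def using k2c by simp
  qed
  then have "f2 y = id" using f2_centr[OF yH] by blast
  then have "y \<in> D" unfolding D_def C_def using yH yP by simp
  then show ?thesis unfolding D'_def y_def using kc by simp
qed

lemma decP: assumes p: "p \<in> P" shows "\<exists>k\<in>K. \<exists>d\<in>D. p = k \<otimes> d"
proof -
  obtain k c where kc: "k \<in> K" "c \<in> C" "p = k \<otimes> c" using dec_even[OF PHE[OF p] all[OF PHE[OF p]]] by blast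
  have cc: "c \<in> carrier U" using kc by simp
  have kk: "k \<in> carrier U" using kc by simp
  have "c = inv k \<otimes> p" using kc(3) cc kk by simp
  moreover have "inv k \<otimes> p \<in> P" using kc(1) p by simp
  ultimately have "c \<in> P" by simp
  then show ?thesis using kc unfolding D_def by blast
qed

lemma finD: "finite D" using finite_subset[OF _ finH] D_P PHE by blast
lemma finD': "finite D'" using finite_subset[OF _ finH] D'_P PHE by blast
lemma finE: "finite E" unfolding E_def using finD by simp

lemma KD: "K \<inter> D = {\<one>}" using KC D_C oneK subgroup.one_closed[OF D_sub] by blast
lemma KE: "K \<inter> E = {\<one>}" using KD subgroup.one_closed[OF E_sub] unfolding E_def by blast

lemma card_D: "card D = 24"
proof -
  have "P = {k \<otimes> d | k d. k \<in> K \<and> d \<in> D}"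
  proof
    show "P \<subseteq> {k \<otimes> d | k d. k \<in> K \<and> d \<in> D}" using decP by blast
    show "{k \<otimes> d | k d. k \<in> K \<and> d \<in> D} \<subseteq> P" using D_P by auto
  qed
  then have "card P = card K * card D" using card_mult_trivial[OF K_sub D_sub KD finK finD] by simp
  then show ?thesis using card_P card_K by simp
qed

lemma card_D': "card D' = 24"
proof -
  have eq: "D' = cg U t ` D"
  proof
    show "D' \<subseteq> cg U t ` D"
    proof
      fix x assume x: "x \<in> D'"
      then have "cg U (inv t) x \<in> D" "x \<in> carrier U" unfolding D'_def by auto
      moreover have "x = cg U t (cg U (inv t) x)" using D'c[OF x] by simp
      ultimately show "x \<in> cg U t ` D" by blast
    qed
    show "cg U t ` D \<subseteq> D'"
    proof
      fix x assume "x \<in> cg U t ` D"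
      then obtain d where d: "d \<in> D" "x = cg U t d" by blast
      have dc: "d \<in> carrier U" using D_P[OF d(1)] by simp
      show "x \<in> D'" unfolding D'_def using d dc by simp
    qed
  qed
  have "inj_on (cg U t) D"
  proof (rule inj_onI)
    fix x y assume "x \<in> D" "y \<in> D" "cg U t x = cg U t y"
    then show "x = y" using cg_inj[OF tc] D_P PcE by metis
  qed
  then show ?thesis unfolding eq using card_D by (simp add: card_image)
qed

lemma card_E: "card E = 2"
proof -
  have "D' = {k \<otimes> e | k e. k \<in> K \<and> e \<in> E}"
  proof
    show "D' \<subseteq> {k \<otimes> e | k e. k \<in> K \<and> e \<in> E}"
    proof
      fix x assume x: "x \<in> D'"
      obtain k d where kd: "k \<in> K" "d \<in> D" "x = k \<otimes> d" using decP[OF D'_P[OF x]] by blast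
      have kc: "k \<in> carrier U" using kd by simp
      have dc: "d \<in> carrier U" using D_P[OF kd(2)] by simp
      have "d = inv k \<otimes> x" using kd kc dc by simp
      moreover have "inv k \<otimes> x \<in> D'"
        using subgroup.m_closed[OF D'_sub subgroup.m_inv_closed[OF D'_sub K_D'[OF kd(1)]] x] .
      ultimately have "d \<in> E" unfolding E_def using kd by simp
      then show "x \<in> {k \<otimes> e | k e. k \<in> K \<and> e \<in> E}" using kd by blast
    qed
    show "{k \<otimes> e | k e. k \<in> K \<and> e \<in> E} \<subseteq> D'"
    proof
      fix x assume "x \<in> {k \<otimes> e | k e. k \<in> K \<and> e \<in> E}"
      then obtain k e where ke: "k \<in> K" "e \<in> E" "x = k \<otimes> e" by blast
      have "e \<in> D'" using ke unfolding E_def by simp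
      then show "x \<in> D'" using subgroup.m_closed[OF D'_sub K_D'[OF ke(1)]] ke by simp
    qed
  qed
  then have "card D' = card K * card E" using card_mult_trivial[OF K_sub E_sub KE finK finE] by simp
  then show ?thesis using card_D' card_K by simp
qed

lemma decD: assumes d: "d \<in> D" shows "\<exists>k'\<in>K'. \<exists>e2\<in>E. d = k' \<otimes> e2"
proof -
  have dc: "d \<in> carrier U" using D_P[OF d] by simp
  have "cg U (inv t) d \<in> P" using tP2 D_P[OF d] by simp
  then obtain k c where kc: "k \<in> K" "c \<in> D" "cg U (inv t) d = k \<otimes> c" using decP by blast
  have kcc: "k \<in> carrier U" "c \<in> carrier U" using kc D_P by auto
  have "d = cg U t (cg U (inv t) d)" using dc by simp
  also have "\<dots> = cg U t k \<otimes> cg U t c" using kc(3) kcc by (simp add: cg_mult)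
  finally have de: "d = cg U t k \<otimes> cg U t c" .
  have k': "cg U t k \<in> K'" using K'_mem_cg[OF kc(1)] .
  have wD': "cg U t c \<in> D'" unfolding D'_def using kcc kc(2) by simp
  have "cg U t c = inv (cg U t k) \<otimes> d" using de kcc by simp
  moreover have "inv (cg U t k) \<otimes> d \<in> D"
    using subgroup.m_closed[OF D_sub subgroup.m_inv_closed[OF D_sub K'_D[OF k']] d] .
  ultimately have "cg U t c \<in> E" unfolding E_def using wD' by simp
  then show ?thesis using k' de by blast
qed

lemma contradiction: False
proof -
  have "E \<noteq> {\<one>}" using card_E by auto
  moreover have "\<one> \<in> E" using subgroup.one_closed[OF E_sub] .
  ultimately obtain e where e: "e \<in> E" "e \<noteq> \<one>" by blast
  have E2: "x = \<one> \<or> x = e" if x: "x \<in> E" for x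
  proof -
    have "{\<one>, e} \<subseteq> E" using e \<open>\<one> \<in> E\<close> by simp
    moreover have "card {\<one>, e} = 2" using e by simp
    ultimately have "{\<one>, e} = E" using card_subset_eq[OF finE] card_E by simp
    then show ?thesis using x by blast
  qed
  have eD: "e \<in> D" and eD': "e \<in> D'" using e unfolding E_def by auto
  have eP: "e \<in> P" using D_P[OF eD] .
  have ec: "e \<in> carrier U" using eP by simp
  have eC: "e \<in> C" using D_C[OF eD] .
  have comm: "e \<otimes> p = p \<otimes> e" if p: "p \<in> P" for p
  proof -
    obtain k d where kd: "k \<in> K" "d \<in> D" "p = k \<otimes> d" using decP[OF p] by blast
    obtain k' e2 where ke: "k' \<in> K'" "e2 \<in> E" "d = k' \<otimes> e2" using decD[OF kd(2)] by blast
    have kc: "k \<in> carrier U" using kd by simp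
    have k'c: "k' \<in> carrier U" using K'c[OF ke(1)] .
    have e2c: "e2 \<in> carrier U" using ke(2) E2 ec by auto
    have c1: "e \<otimes> k = k \<otimes> e" using C_comm[OF eC kd(1)] .
    have c2: "e \<otimes> k' = k' \<otimes> e"
    proof -
      have u: "cg U (inv t) e \<in> C" using eD' D_C unfolding D'_def by simp
      have v: "cg U (inv t) k' \<in> K" using ke(1) unfolding K'_def by simp
      have "cg U (inv t) e \<otimes> cg U (inv t) k' = cg U (inv t) k' \<otimes> cg U (inv t) e"
        using C_comm[OF u v] .
      then have "cg U t (cg U (inv t) e) \<otimes> cg U t (cg U (inv t) k') = cg U t (cg U (inv t) k') \<otimes> cg U t (cg U (inv t) e)"
        using cg_commute[OF tc, of "cg U (inv t) e" "cg U (inv t) k'"] ec k'c by simp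
      then show ?thesis using ec k'c by simp
    qed
    have c3: "e \<otimes> e2 = e2 \<otimes> e" using E2[OF ke(2)] ec by auto
    have "e \<otimes> d = d \<otimes> e" unfolding ke(3) using comm_mult[OF ec k'c e2c c2 c3] .
    moreover have dc: "d \<in> carrier U" using D_P[OF kd(2)] by simp
    ultimately show ?thesis unfolding kd(3) using comm_mult[OF ec kc dc c1] by simp
  qed
  have eH: "e \<in> H" using eP by simp
  have f1e1: "f1 e 1 = 1" using f1_fix1[OF eH] eP by simp
  have fc: "f1 e \<circ> \<sigma> = \<sigma> \<circ> f1 e" if s: "\<sigma> permutes {1..5}" "\<sigma> 1 = 1" for \<sigma>
  proof -
    obtain h where h: "h \<in> H" "f1 h = \<sigma>" using f1_surj[OF s(1)] by blast
    then have hP: "h \<in> P" using f1_fix1 s(2) by blast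
    have "f1 e \<circ> f1 h = f1 (e \<otimes> h)" using f1_mult eH h by simp
    also have "\<dots> = f1 (h \<otimes> e)" using comm[OF hP] by simp
    also have "\<dots> = f1 h \<circ> f1 e" using f1_mult eH h by simp
    finally show ?thesis using h by simp
  qed
  have "f1 e = id" using center5[OF f1_perm[OF eH] f1e1] fc by blast
  then have "e \<in> K" using f1_id_K[OF eH] by simp
  then have "e \<in> K \<inter> C" using eC by simp
  then show False using KC e(2) by blast
qed

end

context amal begin

lemma sign_compat: "h \<in> H \<Longrightarrow> evenperm (f1 h) = evenperm (f2 h)"
proof (cases "\<exists>h0\<in>H. \<not> evenperm (f2 h0)")
  case True
  then obtain h0 where "h0 \<in> H" "\<not> evenperm (f2 h0)" by blast
  then show "h \<in> H \<Longrightarrow> ?thesis" using good_case by blast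
next
  case False
  then interpret amal_bad U H P K t j by unfold_locales blast
  show ?thesis using contradiction by simp
qed

end

context amal begin

definition F where "F h = (f1 h, f2 h)"

lemma box_carrier: "carrier (box_prod 5 4) = {(g, h). g permutes {1..5} \<and> h permutes {1..4} \<and> sign g = sign h}"
  by (simp add: box_prod_def)

lemma box_mult: "(a, b) \<otimes>\<^bsub>box_prod 5 4\<^esub> (c, d) = (a \<circ> c, b \<circ> d)"
  by (simp add: box_prod_def DirProd_def sym_group_def)

lemma F_in: "h \<in> H \<Longrightarrow> F h \<in> carrier (box_prod 5 4)"
  unfolding box_carrier F_def using f1_perm f2_perm sign_compat by (simp add: sign_eq_iff)

lemma F_hom: "F \<in> hom (U\<lparr>carrier := H\<rparr>) (box_prod 5 4)"
  unfolding hom_def using F_in by (auto simp: F_def box_mult f1_mult f2_mult)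

lemma F_inj: "inj_on F H"
proof (rule inj_onI)
  fix x y assume x: "x \<in> H" and y: "y \<in> H" and e: "F x = F y"
  have "f1 x = f1 y" "f2 x = f2 y" using e unfolding F_def by auto
  then have k: "x \<otimes> inv y \<in> K" using f1_eq_iff x y by simp
  have "f2 (x \<otimes> inv y) = f2 y \<circ> f2 (inv y)" using f2_mult[OF x iH[OF y]] \<open>f2 x = f2 y\<close> by simp
  also have "\<dots> = id" using f2_inv(2)[OF y] .
  finally have "j (x \<otimes> inv y) = j \<one>" using f2_K[OF k] jone by simp
  then have e1: "x \<otimes> inv y = \<one>" using jinj[OF k oneK] by simp
  have "x = (x \<otimes> inv y) \<otimes> y" using x y by (simp add: m_assoc)
  also have "\<dots> = y" using e1 y by simp
  finally show "x = y" .
qed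

lemma F_bij: "bij_betw F H (carrier (box_prod 5 4))"
proof -
  have sub: "F ` H \<subseteq> carrier (box_prod 5 4)" using F_in by auto
  have c: "card (F ` H) = 1440" using card_image[OF F_inj] card_H by simp
  have fin: "finite (carrier (box_prod 5 4))" using card_box by (intro card_ge_0_finite) simp
  have "F ` H = carrier (box_prod 5 4)" using card_subset_eq[OF fin sub] c card_box by simp
  then show ?thesis using F_inj unfolding bij_betw_def by simp
qed

theorem result: "U\<lparr>carrier := H\<rparr> \<cong> box_prod 5 4"
proof -
  have "F \<in> iso (U\<lparr>carrier := H\<rparr>) (box_prod 5 4)" unfolding iso_def using F_hom F_bij by simp
  then show ?thesis unfolding is_iso_def by blast
qed

end

lemma (in group) cg_from_squares:
  assumes P: "subgroup P G" and g: "g \<in> carrier G" and p: "p \<in> P"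
    and gg: "g \<otimes> g \<in> P" and gp: "(g \<otimes> p) \<otimes> (g \<otimes> p) \<in> P"
  shows "cg G g p \<in> P"
proof -
  have pc: "p \<in> carrier G" using p subgroup.subset[OF P] by blast
  have "cg G g p = ((g \<otimes> p) \<otimes> (g \<otimes> p)) \<otimes> inv p \<otimes> inv (g \<otimes> g)"
    using g pc by (simp add: cg_def m_assoc inv_mult_group)
  moreover have "inv p \<in> P" "inv (g \<otimes> g) \<in> P" using subgroup.m_inv_closed[OF P p] subgroup.m_inv_closed[OF P gg] by auto
  ultimately show ?thesis using gp subgroup.m_closed[OF P] by simp
qed

lemma (in group) main_glue:
  fixes Gx Ge Gxy :: "'a set"
  assumes "amalgam_5_2 G Gx Ge Gxy"
    and "primitive_amalgam G Gx Ge Gxy"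
    and "edge_kernel G Gx Ge Gxy = {\<one>}"
    and "G\<lparr>carrier := Gx\<rparr> Mod vertex_kernel G Gx Gxy \<cong> sym_group 5"
    and "G\<lparr>carrier := vertex_kernel G Gx Gxy\<rparr> \<cong> alt_group 4"
  shows "G\<lparr>carrier := Gx\<rparr> \<cong> box_prod 5 4"
proof -
  note am = assms(1)[unfolded amalgam_5_2_def]
  define K where "K = vertex_kernel G Gx Gxy"
  have Gx: "subgroup Gx G" and Ge: "subgroup Ge G" and GI: "Gx \<inter> Ge = Gxy" and finGx: "finite Gx"
    and finGe: "finite Ge"
    and c5: "card (rcosets\<^bsub>G\<lparr>carrier := Gx\<rparr>\<^esub> Gxy) = 5"
    and c2: "card (rcosets\<^bsub>G\<lparr>carrier := Ge\<rparr>\<^esub> Gxy) = 2" using am by auto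
  have P: "subgroup Gxy G" using subgroup_Int[OF Gx Ge] GI by simp
  have PGx: "Gxy \<subseteq> Gx" "Gxy \<subseteq> Ge" using GI by auto
  have Pc: "Gxy \<subseteq> carrier G" using P subgroup.subset by blast
  obtain j where j: "j \<in> iso (G\<lparr>carrier := K\<rparr>) (alt_group 4)" using assms(5) unfolding is_iso_def K_def by blast
  have cQ: "card (rcosets\<^bsub>G\<lparr>carrier := Gx\<rparr>\<^esub> K) = 120"
    using iso_same_card[OF assms(4)] sym_group_card_carrier[of 5] unfolding K_def
    by (simp add: FactGroup_def fact_numeral)
  interpret Ge_grp: group "G\<lparr>carrier := Ge\<rparr>" using subgroup_imp_group[OF Ge] .
  have PGe: "subgroup Gxy (G\<lparr>carrier := Ge\<rparr>)" using subgroup_incl[OF P Ge PGx(2)] .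
  have sq: "g \<otimes> g \<in> Gxy" if "g \<in> Ge" for g
    using Ge_grp.index2_sq[OF PGe c2] finGe that by simp
  have Gec: "Ge \<subseteq> carrier G" using Ge subgroup.subset by blast
  have ex_t: "\<exists>t. t \<in> Ge - Gxy"
  proof (rule ccontr)
    assume "\<not> ?thesis"
    then have "Ge \<subseteq> Gxy" by blast
    then have "rcosets\<^bsub>G\<lparr>carrier := Ge\<rparr>\<^esub> Gxy \<subseteq> {Gxy}"
      unfolding RCOSETS_def using coset_join2[OF _ P] Gec by auto
    then have "card (rcosets\<^bsub>G\<lparr>carrier := Ge\<rparr>\<^esub> Gxy) \<le> 1"
      using card_mono[of "{Gxy}"] by simp
    then show False using c2 by simp
  qed
  define t where "t = (SOME t. t \<in> Ge - Gxy)"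
  have tGe: "t \<in> Ge" using someI_ex[OF ex_t] unfolding t_def by blast
  have tc: "t \<in> carrier G" using tGe Gec by blast
  have tinvGe: "inv t \<in> Ge" using subgroup.m_inv_closed[OF Ge tGe] .
  have tP: "cg G g p \<in> Gxy" if g: "g \<in> Ge" and p: "p \<in> Gxy" for g p
  proof (rule cg_from_squares[OF P _ p])
    show "g \<in> carrier G" using g Gec by blast
    show "g \<otimes> g \<in> Gxy" using sq[OF g] .
    have "g \<otimes> p \<in> Ge" using subgroup.m_closed[OF Ge g] p PGx(2) by blast
    then show "(g \<otimes> p) \<otimes> (g \<otimes> p) \<in> Gxy" using sq by blast
  qed
  have Kc: "K \<subseteq> carrier G" unfolding K_def vertex_kernel_def normal_core_def
    using conj_set_mem[OF _ Pc] subgroup.one_closed[OF Gx] by blast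
  have Kmem: "cg G (inv h) y \<in> Gxy" if "y \<in> K" "h \<in> Gx" for y h
    using that conj_set_mem[OF _ Pc] subgroup.subset[OF Gx]
    unfolding K_def vertex_kernel_def normal_core_def by blast
  have edge: "x = \<one>" if x: "x \<in> K" and y: "cg G (inv t) x \<in> K" for x
  proof -
    have xc: "x \<in> carrier G" using x Kc by blast
    have "x \<in> normal_core G (stab_y G Gx Ge Gxy) Gxy"
      unfolding normal_core_def
    proof
      fix g assume g: "g \<in> stab_y G Gx Ge Gxy"
      then have gc: "g \<in> carrier G" and h: "cg G (inv t) g \<in> Gx"
        unfolding stab_y_def t_def[symmetric] using conj_set_mem[OF tc subgroup.subset[OF Gx]] by auto
      define h where "h = cg G (inv t) g"
      have hc: "h \<in> carrier G" unfolding h_def using gc tc by simp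
      have gh: "g = cg G t h" unfolding h_def using gc tc by simp
      have "cg G (inv g) x = cg G t (cg G (inv h) (cg G (inv t) x))"
      proof -
        have "inv g = cg G t (inv h)" unfolding gh using tc hc by (simp add: cg_inv)
        then have "cg G (inv g) x = cg G (cg G t (inv h)) (cg G t (cg G (inv t) x))" using tc xc by simp
        also have "\<dots> = cg G t (cg G (inv h) (cg G (inv t) x))"
          using tc hc xc by (intro cg_cg[symmetric]) simp_all
        finally show ?thesis .
      qed
      moreover have "cg G (inv h) (cg G (inv t) x) \<in> Gxy" using Kmem[OF y] h unfolding h_def by simp
      ultimately have "cg G (inv g) x \<in> Gxy" using tP[OF tGe] by simp
      then show "x \<in> conj_set G g Gxy" using conj_set_mem[OF gc Pc] xc by simp
    qed
    then have "x \<in> edge_kernel G Gx Ge Gxy" using x unfolding edge_kernel_def K_def by simp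
    then show ?thesis using assms(3) by simp
  qed
  interpret A: amal G Gx Gxy K t j
  proof (rule amal.intro)
    show "group G" by (rule is_group)
  next
    show "amal_axioms G Gx Gxy K t j"
  proof (rule amal_axioms.intro)
    show "subgroup Gx G" by (rule Gx)
    show "subgroup Gxy G" by (rule P)
    show "Gxy \<subseteq> Gx" by (rule PGx(1))
    show "finite Gx" by (rule finGx)
    show "K = normal_core G Gx Gxy" unfolding K_def vertex_kernel_def ..
    show "card (rcosets\<^bsub>G\<lparr>carrier := Gx\<rparr>\<^esub> Gxy) = 5" by (rule c5)
    show "card (rcosets\<^bsub>G\<lparr>carrier := Gx\<rparr>\<^esub> K) = 120" by (rule cQ)
    show "j \<in> iso (G\<lparr>carrier := K\<rparr>) (alt_group 4)" by (rule j)
    show "t \<in> carrier G" by (rule tc)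
    show "\<And>p. p \<in> Gxy \<Longrightarrow> cg G t p \<in> Gxy" using tP[OF tGe] .
    show "\<And>p. p \<in> Gxy \<Longrightarrow> cg G (inv t) p \<in> Gxy" using tP[OF tinvGe] .
    show "\<And>x. x \<in> K \<Longrightarrow> cg G (inv t) x \<in> K \<Longrightarrow> x = \<one>" using edge .
  qed
  qed
  show ?thesis by (rule A.result)
qed


theorem mainTheorem14:
  fixes U :: "('a, 'b) monoid_scheme" and Gx Ge Gxy :: "'a set"
  assumes "amalgam_5_2 U Gx Ge Gxy"
    and "primitive_amalgam U Gx Ge Gxy"
    and "edge_kernel U Gx Ge Gxy = {\<one>\<^bsub>U\<^esub>}"
    and "U\<lparr>carrier := Gx\<rparr> Mod vertex_kernel U Gx Gxy \<cong> sym_group 5"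
    and "U\<lparr>carrier := vertex_kernel U Gx Gxy\<rparr> \<cong> alt_group 4"
  shows "U\<lparr>carrier := Gx\<rparr> \<cong> box_prod 5 4"
proof -
  have "group U" using assms(1) unfolding amalgam_5_2_def by simp
  then show ?thesis using group.main_glue[OF _ assms] by blast
qed

end
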